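(* Let $\tau$ be a signature, $\phi\in SO(\tau)$, $\{\mathcal B_j:j\in J\}$ a family of $\tau$-structures, $\mathcal G$ an ultrafilter on $J$, and $(\mathcal A_\omega,\Upsilon_{\lim})$ the limit-Henkin model formed from $\{\mathcal B_j:j\in J\}$ by an $\omega$-long ultrachain $\langle\mathcal A_n:n\in\omega\rangle$ with $\mathcal A_0=\prod_{j\in J}\mathcal B_j/\mathcal G$. Then $\{j\in J:\mathcal B_j\models\phi\}\in\mathcal G$ if and only if $(\mathcal A_\omega,\Upsilon_{\lim})\models_\lambda\phi$.
   Context: $SO(\tau)$: second-order $\tau$-formulas with relation variables only; $\mathcal B_j\models\phi$ is the standard (full) second-order semantics. Decomposability: if $\mathcal C=\prod_k\mathcal C_k/\mathcal H$, a relation $R\subseteq C^m$ ($m\ge1$) is decomposable if $R=\prod_k R_k/\mathcal H$ for some $R_k\subseteq C_k^m$. For ultrafilters $\mathcal F$ on $I$, $\mathcal G$ on $J$, $X\in\mathcal G\times\mathcal F$ iff $\{i:\{j:(j,i)\in X\}\in\mathcal G\}\in\mathcal F$. An $\omega$-long ultrachain is a sequence $\langle\mathcal A_n:n\in\omega\rangle$ with $\mathcal A_{n+1}={}^{I_n}\mathcal A_n/\mathcal F_n$ for ultrafilters $\mathcal F_n$ on sets $I_n$, each $\mathcal A_n$ identified with its diagonal image so that $\mathcal A_n\subseteq\mathcal A_{n+1}$; its limit is $\mathcal A_\omega=\bigcup_n\mathcal A_n$. With $\mathcal A_0=\prod_j\mathcal B_j/\mathcal G$, $\mathcal A_n$ is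 identified with the ultraproduct of the family $\{\mathcal B_j\}$ (indexed by $J\times I_0\times\dots\times I_{n-1}$) by $\mathcal G\times\mathcal F_0\times\dots\times\mathcal F_{n-1}$; $\Upsilon_n$ is the set of relations on $\mathcal A_n$ decomposable w.r.t. this presentation. $\Upsilon_{\lim}$ is the set of relations $R$ on $\mathcal A_\omega$ for which there are $m$ and $R_m\in\Upsilon_m$ such that, defining $\langle\mathcal A_{k+1},R_{k+1}\rangle={}^{I_k}\langle\mathcal A_k,R_k\rangle/\mathcal F_k$ for $k\ge m$, $R=\bigcup_{k\ge m}R_k$. The pair $(\mathcal A_\omega,\Upsilon_{\lim})$ is the limit-Henkin model. $\models_\lambda$: Henkin semantics in $(\mathcal A_\omega,\Upsilon_{\lim})$, i.e. first-order parts evaluated as usual in the expansion by the assigned relations, second-order quantifiers ranging only over relations in $\Upsilon_{\lim}$ of the appropriate arity, and $\models_\lambda\phi$ meaning truth under all assignments (relation variables assigned values in $\Upsilon_{\lim}$). *)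

theory Defs
  imports Main
begin

text \<open>First-order variables are natural numbers; a second-order (relation) variable
is a pair (X, m) of a name X and an arity m; its arity is determined by the
number of arguments it is applied to.\<close>

datatype 'f trm = Var nat | Fn 'f "'f trm list"

datatype ('f, 'r) form =
    Eq "'f trm" "'f trm"
  | Rel 'r "'f trm list"
  | RVar nat "'f trm list"
  | Neg "('f, 'r) form"
  | Conj "('f, 'r) form" "('f, 'r) form"
  | Ex nat "('f, 'r) form"
  | ExR nat nat "('f, 'r) form"     \<comment> \<open>ExR X m: second-order quantifier over m-ary relations\<close>

fun wf_trm :: "('f \<Rightarrow> nat) \<Rightarrow> 'f trm \<Rightarrow> bool" where
  "wf_trm fa (Var x) = True"
| "wf_trm fa (Fn f ts) = (length ts = fa f \<and> (\<forall>t\<in>set ts. wf_trm fa t))"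

fun wf_form :: "('f \<Rightarrow> nat) \<Rightarrow> ('r \<Rightarrow> nat) \<Rightarrow> ('f, 'r) form \<Rightarrow> bool" where
  "wf_form fa ra (Eq s t) = (wf_trm fa s \<and> wf_trm fa t)"
| "wf_form fa ra (Rel r ts) = (length ts = ra r \<and> (\<forall>t\<in>set ts. wf_trm fa t))"
| "wf_form fa ra (RVar X ts) = (ts \<noteq> [] \<and> (\<forall>t\<in>set ts. wf_trm fa t))"
| "wf_form fa ra (Neg p) = wf_form fa ra p"
| "wf_form fa ra (Conj p q) = (wf_form fa ra p \<and> wf_form fa ra q)"
| "wf_form fa ra (Ex x p) = wf_form fa ra p"
| "wf_form fa ra (ExR X m p) = (1 \<le> m \<and> wf_form fa ra p)"

text \<open>m-ary relations on a set are sets of lists of length m.\<close>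
definition tuples :: "nat \<Rightarrow> 'u set \<Rightarrow> 'u list set" where
  "tuples m A = {xs. length xs = m \<and> set xs \<subseteq> A}"

record ('f, 'r, 'u) struct =
  dom :: "'u set"
  fun_int :: "'f \<Rightarrow> 'u list \<Rightarrow> 'u"
  rel_int :: "'r \<Rightarrow> 'u list set"

definition is_struct :: "('f \<Rightarrow> nat) \<Rightarrow> ('r \<Rightarrow> nat) \<Rightarrow> ('f, 'r, 'u) struct \<Rightarrow> bool" where
  "is_struct fa ra S \<longleftrightarrow> dom S \<noteq> {}
     \<and> (\<forall>f xs. xs \<in> tuples (fa f) (dom S) \<longrightarrow> fun_int S f xs \<in> dom S)
     \<and> (\<forall>r. rel_int S r \<subseteq> tuples (ra r) (dom S))"

fun teval :: "('f, 'r, 'u) struct \<Rightarrow> (nat \<Rightarrow> 'u) \<Rightarrow> 'f trm \<Rightarrow> 'u" where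
  "teval S v (Var x) = v x"
| "teval S v (Fn f ts) = fun_int S f (map (teval S v) ts)"

fun hsat :: "('f, 'r, 'u) struct \<Rightarrow> (nat \<Rightarrow> 'u list set set) \<Rightarrow> (nat \<Rightarrow> 'u)
      \<Rightarrow> (nat \<times> nat \<Rightarrow> 'u list set) \<Rightarrow> ('f, 'r) form \<Rightarrow> bool" where
  "hsat S Ups v V (Eq s t) = (teval S v s = teval S v t)"
| "hsat S Ups v V (Rel r ts) = (map (teval S v) ts \<in> rel_int S r)"
| "hsat S Ups v V (RVar X ts) = (map (teval S v) ts \<in> V (X, length ts))"
| "hsat S Ups v V (Neg p) = (\<not> hsat S Ups v V p)"
| "hsat S Ups v V (Conj p q) = (hsat S Ups v V p \<and> hsat S Ups v V q)"
| "hsat S Ups v V (Ex x p) = (\<exists>a\<in>dom S. hsat S Ups (v(x := a)) V p)"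
| "hsat S Ups v V (ExR X m p) = (\<exists>R\<in>Ups m. hsat S Ups v (V((X, m) := R)) p)"

definition henkin_models :: "('f, 'r, 'u) struct \<Rightarrow> (nat \<Rightarrow> 'u list set set) \<Rightarrow> ('f, 'r) form \<Rightarrow> bool" where
  "henkin_models S Ups p \<longleftrightarrow>
     (\<forall>v V. (\<forall>x. v x \<in> dom S) \<longrightarrow> (\<forall>X m. 1 \<le> m \<longrightarrow> V (X, m) \<in> Ups m) \<longrightarrow> hsat S Ups v V p)"

definition full_rels :: "('f, 'r, 'u) struct \<Rightarrow> nat \<Rightarrow> 'u list set set" where
  "full_rels S m = Pow (tuples m (dom S))"

definition full_models :: "('f, 'r, 'u) struct \<Rightarrow> ('f, 'r) form \<Rightarrow> bool" where
  "full_models S p \<longleftrightarrow> henkin_models S (full_rels S) p"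

definition ultrafilter_on :: "'a set \<Rightarrow> 'a set set \<Rightarrow> bool" where
  "ultrafilter_on I U \<longleftrightarrow> U \<subseteq> Pow I \<and> I \<in> U \<and> {} \<notin> U
     \<and> (\<forall>A\<in>U. \<forall>B\<in>U. A \<inter> B \<in> U)
     \<and> (\<forall>A\<in>U. \<forall>B. A \<subseteq> B \<and> B \<subseteq> I \<longrightarrow> B \<in> U)
     \<and> (\<forall>A. A \<subseteq> I \<longrightarrow> A \<in> U \<or> I - A \<in> U)"

text \<open>Index points of level n: pairs (j, [i_0, ..., i_{n-1}]).
  Qlarge J G I F n P says that {(j,i_0,...,i_{n-1}) : P j [i_0..i_{n-1}]} belongs to
  G x F_0 x ... x F_{n-1}, where (per the context) X \<in> G x F iff
  {i : {j : (j,i) \<in> X} \<in> G} \<in> F, iterated from the left.\<close>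
fun Qlarge :: "'j set \<Rightarrow> 'j set set \<Rightarrow> (nat \<Rightarrow> 'i set) \<Rightarrow> (nat \<Rightarrow> 'i set set)
      \<Rightarrow> nat \<Rightarrow> ('j \<Rightarrow> 'i list \<Rightarrow> bool) \<Rightarrow> bool" where
  "Qlarge J G I F 0 P = ({j \<in> J. P j []} \<in> G)"
| "Qlarge J G I F (Suc n) P = ({i \<in> I n. Qlarge J G I F n (\<lambda>j xs. P j (xs @ [i]))} \<in> F n)"

definition vlists :: "(nat \<Rightarrow> 'i set) \<Rightarrow> nat \<Rightarrow> 'i list set" where
  "vlists I n = {xs. length xs = n \<and> (\<forall>k<n. xs ! k \<in> I k)}"

text \<open>Following the identification in the context, an element of A_n is represented by a
  function f j [i_0,...,i_{n-1}] \<in> B_j; to make A_n \<subseteq> A_(n+1) literally (diagonal embedding),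
  functions are defined on all lists and "n-dependent" ones only look at the first n entries.\<close>
definition ndep :: "nat \<Rightarrow> ('j \<Rightarrow> 'i list \<Rightarrow> 'u) \<Rightarrow> bool" where
  "ndep n f \<longleftrightarrow> (\<forall>j xs. n \<le> length xs \<longrightarrow> f j xs = f j (take n xs))"

definition vfun :: "'j set \<Rightarrow> ('j \<Rightarrow> ('f, 'r, 'u) struct) \<Rightarrow> (nat \<Rightarrow> 'i set) \<Rightarrow> nat
      \<Rightarrow> ('j \<Rightarrow> 'i list \<Rightarrow> 'u) \<Rightarrow> bool" where
  "vfun J B I n f \<longleftrightarrow> ndep n f \<and> (\<forall>j\<in>J. \<forall>xs\<in>vlists I n. f j xs \<in> dom (B j))"

definition ueqv :: "'j set \<Rightarrow> 'j set set \<Rightarrow> (nat \<Rightarrow> 'i set) \<Rightarrow> (nat \<Rightarrow> 'i set set)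
      \<Rightarrow> ('j \<Rightarrow> 'i list \<Rightarrow> 'u) \<Rightarrow> ('j \<Rightarrow> 'i list \<Rightarrow> 'u) \<Rightarrow> bool" where
  "ueqv J G I F f g \<longleftrightarrow> (\<exists>n. ndep n f \<and> ndep n g \<and> Qlarge J G I F n (\<lambda>j xs. f j xs = g j xs))"

definition ucls :: "'j set \<Rightarrow> 'j set set \<Rightarrow> (nat \<Rightarrow> 'i set) \<Rightarrow> (nat \<Rightarrow> 'i set set)
      \<Rightarrow> ('j \<Rightarrow> 'i list \<Rightarrow> 'u) \<Rightarrow> ('j \<Rightarrow> 'i list \<Rightarrow> 'u) set" where
  "ucls J G I F f = {g. (\<exists>n. ndep n g) \<and> ueqv J G I F f g}"

text \<open>Universe of A_n = prod_{(j,i_0..i_{n-1})} B_j / (G x F_0 x ... x F_{n-1}).\<close>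
definition An :: "'j set \<Rightarrow> ('j \<Rightarrow> ('f, 'r, 'u) struct) \<Rightarrow> 'j set set \<Rightarrow> (nat \<Rightarrow> 'i set)
      \<Rightarrow> (nat \<Rightarrow> 'i set set) \<Rightarrow> nat \<Rightarrow> ('j \<Rightarrow> 'i list \<Rightarrow> 'u) set set" where
  "An J B G I F n = ucls J G I F ` {f. vfun J B I n f}"

definition urep :: "'j set \<Rightarrow> ('j \<Rightarrow> ('f, 'r, 'u) struct) \<Rightarrow> 'j set set \<Rightarrow> (nat \<Rightarrow> 'i set)
      \<Rightarrow> (nat \<Rightarrow> 'i set set) \<Rightarrow> ('j \<Rightarrow> 'i list \<Rightarrow> 'u) set \<Rightarrow> ('j \<Rightarrow> 'i list \<Rightarrow> 'u)" where
  "urep J B G I F c = (SOME f. (\<exists>n. vfun J B I n f) \<and> c = ucls J G I F f)"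

definition limit_struct :: "'j set \<Rightarrow> ('j \<Rightarrow> ('f, 'r, 'u) struct) \<Rightarrow> 'j set set \<Rightarrow> (nat \<Rightarrow> 'i set)
      \<Rightarrow> (nat \<Rightarrow> 'i set set) \<Rightarrow> ('f, 'r, ('j \<Rightarrow> 'i list \<Rightarrow> 'u) set) struct" where
  "limit_struct J B G I F =
     \<lparr> dom = (\<Union>n. An J B G I F n),
       fun_int = (\<lambda>f cs. ucls J G I F
          (\<lambda>j xs. fun_int (B j) f (map (\<lambda>c. urep J B G I F c j xs) cs))),
       rel_int = (\<lambda>r. {cs. \<exists>fs n. cs = map (ucls J G I F) fs \<and> (\<forall>f\<in>set fs. vfun J B I n f)
          \<and> Qlarge J G I F n (\<lambda>j xs. map (\<lambda>f. f j xs) fs \<in> rel_int (B j) r)}) \<rparr>"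

definition ups_n :: "'j set \<Rightarrow> ('j \<Rightarrow> ('f, 'r, 'u) struct) \<Rightarrow> 'j set set \<Rightarrow> (nat \<Rightarrow> 'i set)
      \<Rightarrow> (nat \<Rightarrow> 'i set set) \<Rightarrow> nat \<Rightarrow> nat \<Rightarrow> ('j \<Rightarrow> 'i list \<Rightarrow> 'u) set list set set" where
  "ups_n J B G I F n m = {R. \<exists>Rp.
      (\<forall>j\<in>J. \<forall>xs\<in>vlists I n. Rp j xs \<subseteq> tuples m (dom (B j)))
      \<and> R = {cs. \<exists>fs. length fs = m \<and> cs = map (ucls J G I F) fs \<and> (\<forall>f\<in>set fs. vfun J B I n f)
               \<and> Qlarge J G I F n (\<lambda>j xs. map (\<lambda>f. f j xs) fs \<in> Rp j xs)}}"

text \<open>Ultrapower step: A_(k+1) = A_k^{I_k}/F_k, where (under the identification) an element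
  [g] of A_(k+1) corresponds to the function i \<mapsto> [usec k i g] : I_k \<rightarrow> A_k.
  ext_rel k R_k is the relation R_(k+1) of  <A_(k+1), R_(k+1)> = <A_k, R_k>^{I_k}/F_k.\<close>
definition usec :: "nat \<Rightarrow> 'i \<Rightarrow> ('j \<Rightarrow> 'i list \<Rightarrow> 'u) \<Rightarrow> ('j \<Rightarrow> 'i list \<Rightarrow> 'u)" where
  "usec k i g = (\<lambda>j xs. g j (take k xs @ [i]))"

definition ext_rel :: "'j set \<Rightarrow> ('j \<Rightarrow> ('f, 'r, 'u) struct) \<Rightarrow> 'j set set \<Rightarrow> (nat \<Rightarrow> 'i set)
      \<Rightarrow> (nat \<Rightarrow> 'i set set) \<Rightarrow> nat \<Rightarrow> ('j \<Rightarrow> 'i list \<Rightarrow> 'u) set list set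
      \<Rightarrow> ('j \<Rightarrow> 'i list \<Rightarrow> 'u) set list set" where
  "ext_rel J B G I F k R = {cs. \<exists>gs. cs = map (ucls J G I F) gs \<and> (\<forall>g\<in>set gs. vfun J B I (Suc k) g)
      \<and> {i \<in> I k. map (\<lambda>g. ucls J G I F (usec k i g)) gs \<in> R} \<in> F k}"

fun rel_chain :: "'j set \<Rightarrow> ('j \<Rightarrow> ('f, 'r, 'u) struct) \<Rightarrow> 'j set set \<Rightarrow> (nat \<Rightarrow> 'i set)
      \<Rightarrow> (nat \<Rightarrow> 'i set set) \<Rightarrow> nat \<Rightarrow> ('j \<Rightarrow> 'i list \<Rightarrow> 'u) set list set \<Rightarrow> nat
      \<Rightarrow> ('j \<Rightarrow> 'i list \<Rightarrow> 'u) set list set" where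
  "rel_chain J B G I F m R 0 = R"
| "rel_chain J B G I F m R (Suc d) = ext_rel J B G I F (m + d) (rel_chain J B G I F m R d)"

definition ups_lim :: "'j set \<Rightarrow> ('j \<Rightarrow> ('f, 'r, 'u) struct) \<Rightarrow> 'j set set \<Rightarrow> (nat \<Rightarrow> 'i set)
      \<Rightarrow> (nat \<Rightarrow> 'i set set) \<Rightarrow> nat \<Rightarrow> ('j \<Rightarrow> 'i list \<Rightarrow> 'u) set list set set" where
  "ups_lim J B G I F m = {(\<Union>d. rel_chain J B G I F m0 R d) | m0 R. R \<in> ups_n J B G I F m0 m}"

end

theory Submission
  imports Defs
begin

lemma vlists_snoc: "xs \<in> vlists I n \<Longrightarrow> i \<in> I n \<Longrightarrow> xs @ [i] \<in> vlists I (Suc n)"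
  by (auto simp: vlists_def nth_append less_Suc_eq)

lemma vlists_len: "xs \<in> vlists I n \<Longrightarrow> length xs = n"
  by (simp add: vlists_def)

lemma vlists_take: "xs \<in> vlists I N \<Longrightarrow> n \<le> N \<Longrightarrow> take n xs \<in> vlists I n"
  by (auto simp: vlists_def)

lemma vlists_nil: "[] \<in> vlists I 0"
  by (simp add: vlists_def)

lemma Q_cong:
  "(\<And>j xs. j \<in> J \<Longrightarrow> xs \<in> vlists I n \<Longrightarrow> P j xs = P' j xs)
   \<Longrightarrow> Qlarge J G I F n P = Qlarge J G I F n P'"
proof (induction n arbitrary: P P')
  case 0
  have "{j \<in> J. P j []} = {j \<in> J. P' j []}" using 0 vlists_nil[of I] by blast
  then show ?case by simp
next
  case (Suc n)
  have h: "\<And>i. i \<in> I n \<Longrightarrow> Qlarge J G I F n (\<lambda>j xs. P j (xs @ [i])) = Qlarge J G I F n (\<lambda>j xs. P' j (xs @ [i]))"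
    by (rule Suc.IH) (simp add: Suc.prems vlists_snoc)
  have "{i \<in> I n. Qlarge J G I F n (\<lambda>j xs. P j (xs @ [i]))}
      = {i \<in> I n. Qlarge J G I F n (\<lambda>j xs. P' j (xs @ [i]))}"
    using h by (intro Collect_cong) blast
  then show ?case by simp
qed

lemma uf_compl: "ultrafilter_on I U \<Longrightarrow> A \<subseteq> I \<Longrightarrow> (I - A \<in> U) = (A \<notin> U)"
  unfolding ultrafilter_on_def
  by (metis Diff_disjoint inf_commute)

lemma uf_top: "ultrafilter_on I U \<Longrightarrow> I \<in> U"
  unfolding ultrafilter_on_def by blast
lemma uf_empty: "ultrafilter_on I U \<Longrightarrow> {} \<notin> U"
  unfolding ultrafilter_on_def by blast
lemma uf_int: "ultrafilter_on I U \<Longrightarrow> A \<in> U \<Longrightarrow> B \<in> U \<Longrightarrow> A \<inter> B \<in> U"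
  unfolding ultrafilter_on_def by blast
lemma uf_up: "ultrafilter_on I U \<Longrightarrow> A \<in> U \<Longrightarrow> A \<subseteq> C \<Longrightarrow> C \<subseteq> I \<Longrightarrow> C \<in> U"
  unfolding ultrafilter_on_def by blast

locale ufs =
  fixes J :: "'j set" and G :: "'j set set" and I :: "nat \<Rightarrow> 'i set" and F :: "nat \<Rightarrow> 'i set set"
  assumes ufG: "ultrafilter_on J G" and ufF: "\<And>n. ultrafilter_on (I n) (F n)"
begin

abbreviation "Q \<equiv> Qlarge J G I F"

lemma Q_all: "(\<And>j xs. j \<in> J \<Longrightarrow> xs \<in> vlists I n \<Longrightarrow> P j xs) \<Longrightarrow> Q n P"
proof (induction n arbitrary: P)
  case 0
  have "{j \<in> J. P j []} = J" using 0 vlists_nil[of I] by blast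
  then show ?case using uf_top[OF ufG] by simp
next
  case (Suc n)
  have h: "\<And>i. i \<in> I n \<Longrightarrow> Q n (\<lambda>j xs. P j (xs @ [i]))"
    by (rule Suc.IH) (simp add: Suc.prems vlists_snoc)
  have "{i \<in> I n. Q n (\<lambda>j xs. P j (xs @ [i]))} = I n"
    using h by blast
  then show ?case using uf_top[OF ufF] by simp
qed

lemma Q_mono: "Q n P \<Longrightarrow> (\<And>j xs. j \<in> J \<Longrightarrow> xs \<in> vlists I n \<Longrightarrow> P j xs \<Longrightarrow> P' j xs) \<Longrightarrow> Q n P'"
proof (induction n arbitrary: P P')
  case 0
  have sub: "{j \<in> J. P j []} \<subseteq> {j \<in> J. P' j []}" using 0(2) vlists_nil[of I] by blast
  have s: "{j \<in> J. P' j []} \<subseteq> J" by blast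
  have "{j \<in> J. P j []} \<in> G" using 0(1) by simp
  from uf_up[OF ufG this sub s] show ?case by simp
next
  case (Suc n)
  have sub: "{i \<in> I n. Q n (\<lambda>j xs. P j (xs @ [i]))} \<subseteq> {i \<in> I n. Q n (\<lambda>j xs. P' j (xs @ [i]))}"
  proof
    fix i assume "i \<in> {i \<in> I n. Q n (\<lambda>j xs. P j (xs @ [i]))}"
    then have i: "i \<in> I n" "Q n (\<lambda>j xs. P j (xs @ [i]))" by auto
    have "Q n (\<lambda>j xs. P' j (xs @ [i]))"
      by (rule Suc.IH[OF i(2)]) (simp add: Suc.prems(2) vlists_snoc i(1))
    then show "i \<in> {i \<in> I n. Q n (\<lambda>j xs. P' j (xs @ [i]))}" using i by simp
  qed
  have s: "{i \<in> I n. Q n (\<lambda>j xs. P' j (xs @ [i]))} \<subseteq> I n" by blast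
  have "{i \<in> I n. Q n (\<lambda>j xs. P j (xs @ [i]))} \<in> F n" using Suc.prems(1) by simp
  from uf_up[OF ufF this sub s] show ?case by simp
qed

lemma Q_conj: "Q n P \<Longrightarrow> Q n P' \<Longrightarrow> Q n (\<lambda>j xs. P j xs \<and> P' j xs)"
proof (induction n arbitrary: P P')
  case 0
  have e: "{j \<in> J. P j []} \<inter> {j \<in> J. P' j []} = {j \<in> J. P j [] \<and> P' j []}" by blast
  have "{j \<in> J. P j []} \<in> G" "{j \<in> J. P' j []} \<in> G" using 0 by simp_all
  from uf_int[OF ufG this] show ?case unfolding e by simp
next
  case (Suc n)
  have sub: "{i \<in> I n. Q n (\<lambda>j xs. P j (xs @ [i]))} \<inter> {i \<in> I n. Q n (\<lambda>j xs. P' j (xs @ [i]))}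
     \<subseteq> {i \<in> I n. Q n (\<lambda>j xs. P j (xs @ [i]) \<and> P' j (xs @ [i]))}"
  proof (intro subsetI)
    fix i assume "i \<in> {i \<in> I n. Q n (\<lambda>j xs. P j (xs @ [i]))} \<inter> {i \<in> I n. Q n (\<lambda>j xs. P' j (xs @ [i]))}"
    then show "i \<in> {i \<in> I n. Q n (\<lambda>j xs. P j (xs @ [i]) \<and> P' j (xs @ [i]))}"
      using Suc.IH[of "\<lambda>j xs. P j (xs @ [i])" "\<lambda>j xs. P' j (xs @ [i])"] by simp
  qed
  have s: "{i \<in> I n. Q n (\<lambda>j xs. P j (xs @ [i]) \<and> P' j (xs @ [i]))} \<subseteq> I n" by blast
  have "{i \<in> I n. Q n (\<lambda>j xs. P j (xs @ [i]))} \<in> F n" "{i \<in> I n. Q n (\<lambda>j xs. P' j (xs @ [i]))} \<in> F n"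
    using Suc.prems by simp_all
  from uf_up[OF ufF uf_int[OF ufF this] sub s] show ?case by simp
qed

lemma Q_neg: "Q n (\<lambda>j xs. \<not> P j xs) \<longleftrightarrow> \<not> Q n P"
proof (induction n arbitrary: P)
  case 0
  have "{j \<in> J. \<not> P j []} = J - {j \<in> J. P j []}" by blast
  then show ?case using uf_compl[OF ufG, of "{j \<in> J. P j []}"] by simp
next
  case (Suc n)
  have "{i \<in> I n. Q n (\<lambda>j xs. \<not> P j (xs @ [i]))} = I n - {i \<in> I n. Q n (\<lambda>j xs. P j (xs @ [i]))}"
  proof -
    have "\<And>i. Q n (\<lambda>j xs. \<not> P j (xs @ [i])) = (\<not> Q n (\<lambda>j xs. P j (xs @ [i])))" by (rule Suc.IH)
    then show ?thesis by blast
  qed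
  then show ?case using uf_compl[OF ufF, of "{i \<in> I n. Q n (\<lambda>j xs. P j (xs @ [i]))}" n] by simp
qed

lemma Q_lift: "n \<le> N \<Longrightarrow> Q N (\<lambda>j xs. P j (take n xs)) = Q n P"
proof (induction N)
  case 0
  then show ?case by simp
next
  case (Suc N)
  show ?case
  proof (cases "n = Suc N")
    case True
    have "Q n (\<lambda>j xs. P j (take n xs)) = Q n P" by (rule Q_cong) (simp add: vlists_len)
    then show ?thesis using True by (simp only:)
  next
    case False
    then have nN: "n \<le> N" using Suc.prems by simp
    have eq: "\<And>i. Q N (\<lambda>j xs. P j (take n (xs @ [i]))) = Q N (\<lambda>j xs. P j (take n xs))"
      by (rule Q_cong) (simp add: vlists_len nN)
    have "Q (Suc N) (\<lambda>j xs. P j (take n xs)) \<longleftrightarrow> {i \<in> I N. Q n P} \<in> F N"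
      using eq Suc.IH[OF nN] by simp
    then show ?thesis using uf_top[OF ufF] uf_empty[OF ufF] by (cases "Q n P") auto
  qed
qed

lemma Q_LV: "n \<le> N \<Longrightarrow> (\<And>j xs. n \<le> length xs \<Longrightarrow> P j xs = P j (take n xs)) \<Longrightarrow> Q N P = Q n P"
proof -
  assume a: "n \<le> N" "\<And>j xs. n \<le> length xs \<Longrightarrow> P j xs = P j (take n xs)"
  have "Q N P = Q N (\<lambda>j xs. P j (take n xs))"
  proof (rule Q_cong)
    fix j xs assume "xs \<in> vlists I N"
    then have "n \<le> length xs" using a(1) vlists_len[of xs I N] by simp
    then show "P j xs = P j (take n xs)" by (rule a(2))
  qed
  then show ?thesis using Q_lift[OF a(1)] by simp
qed

lemma Q_ex: "Q n P \<Longrightarrow> \<exists>j\<in>J. \<exists>xs\<in>vlists I n. P j xs"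
proof (rule ccontr)
  assume a: "Q n P" "\<not> (\<exists>j\<in>J. \<exists>xs\<in>vlists I n. P j xs)"
  have "Q n (\<lambda>j xs. \<not> P j xs)" by (rule Q_all) (use a(2) in blast)
  then show False using Q_neg[of n P] a(1) by simp
qed

lemma Q_list: "(\<And>x. x \<in> set ys \<Longrightarrow> Q n (P x)) \<Longrightarrow> Q n (\<lambda>j xs. \<forall>x\<in>set ys. P x j xs)"
proof (induction ys)
  case Nil
  then show ?case by (intro Q_all) simp
next
  case (Cons a ys)
  then show ?case using Q_conj[of n "P a" "\<lambda>j xs. \<forall>x\<in>set ys. P x j xs"] by simp
qed

lemma Q_const: "Q n (\<lambda>j xs. P j) \<longleftrightarrow> {j \<in> J. P j} \<in> G"
  using Q_LV[of 0 n "\<lambda>j xs. P j"] by simp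

end

lemma ndepD: "ndep n f \<Longrightarrow> n \<le> length xs \<Longrightarrow> f j xs = f j (take n xs)"
  unfolding ndep_def by blast

lemma ndep_mono:
  fixes f :: "'j \<Rightarrow> 'i list \<Rightarrow> 'u"
  assumes a: "ndep n f" "n \<le> N" shows "ndep N f"
proof -
  have "f j xs = f j (take N xs)" if "N \<le> length xs" for j and xs :: "'i list"
    using ndepD[OF a(1), of xs j] ndepD[OF a(1), of "take N xs" j] a(2) that by (simp add: min_absorb1)
  then show ?thesis unfolding ndep_def by blast
qed

lemma map_ndep: "\<forall>f\<in>set fs. ndep N f \<Longrightarrow> N \<le> length xs
   \<Longrightarrow> map (\<lambda>f. f j xs) fs = map (\<lambda>f. f j (take N xs)) fs"
proof (rule map_cong[OF refl])
  fix f assume "\<forall>f\<in>set fs. ndep N f" "N \<le> length xs" "f \<in> set fs"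
  then show "f j xs = f j (take N xs)" by (metis ndepD)
qed

lemma vfun_mono: "vfun J B I n f \<Longrightarrow> n \<le> N \<Longrightarrow> vfun J B I N f"
  unfolding vfun_def
proof (intro conjI ballI)
  assume a: "ndep n f \<and> (\<forall>j\<in>J. \<forall>xs\<in>vlists I n. f j xs \<in> dom (B j))" "n \<le> N"
  show "ndep N f" using a ndep_mono by blast
  fix j xs assume b: "j \<in> J" "xs \<in> vlists I N"
  have "f j xs = f j (take n xs)" using a b vlists_len[OF b(2)] ndepD[of n f xs j] by simp
  moreover have "take n xs \<in> vlists I n" using vlists_take[OF b(2) a(2)] .
  ultimately show "f j xs \<in> dom (B j)" using a b by simp
qed

context ufs begin

abbreviation "uc \<equiv> ucls J G I F"

lemma Q_eq_level:
  assumes "ndep n f" "ndep n g" "n \<le> N"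
  shows "Q N (\<lambda>j xs. f j xs = g j xs) = Q n (\<lambda>j xs. f j xs = g j xs)"
proof (rule Q_LV[OF assms(3)])
  fix j and xs :: "'i list" assume l: "n \<le> length xs"
  show "(f j xs = g j xs) = (f j (take n xs) = g j (take n xs))"
    using ndepD[OF assms(1) l, of j] ndepD[OF assms(2) l, of j] by (simp only:)
qed

lemma ueqv_iff: "ndep n f \<Longrightarrow> ndep n g \<Longrightarrow> ueqv J G I F f g \<longleftrightarrow> Q n (\<lambda>j xs. f j xs = g j xs)"
proof
  assume a: "ndep n f" "ndep n g" "ueqv J G I F f g"
  then obtain n' where n': "ndep n' f" "ndep n' g" "Q n' (\<lambda>j xs. f j xs = g j xs)"
    unfolding ueqv_def by blast
  have "Q (max n n') (\<lambda>j xs. f j xs = g j xs)" using Q_eq_level[OF n'(1,2), of "max n n'"] n'(3) by simp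
  then show "Q n (\<lambda>j xs. f j xs = g j xs)" using Q_eq_level[OF a(1,2), of "max n n'"] by simp
next
  assume "ndep n f" "ndep n g" "Q n (\<lambda>j xs. f j xs = g j xs)"
  then show "ueqv J G I F f g" unfolding ueqv_def by blast
qed

lemma ucls_eq: "ndep n f \<Longrightarrow> ndep n g \<Longrightarrow> uc f = uc g \<longleftrightarrow> Q n (\<lambda>j xs. f j xs = g j xs)"
proof
  assume a: "ndep n f" "ndep n g" "uc f = uc g"
  have "ueqv J G I F g g" using ueqv_iff[OF a(2) a(2)] by (simp add: Q_all)
  then have "g \<in> uc g" using a(2) unfolding ucls_def by blast
  then have "ueqv J G I F f g" using a(3) unfolding ucls_def by blast
  then show "Q n (\<lambda>j xs. f j xs = g j xs)" using ueqv_iff[OF a(1,2)] by simp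
next
  assume a: "ndep n f" "ndep n g" "Q n (\<lambda>j xs. f j xs = g j xs)"
  show "uc f = uc g"
  proof (rule set_eqI)
    fix h
    show "h \<in> uc f \<longleftrightarrow> h \<in> uc g"
    proof (cases "\<exists>n'. ndep n' h")
      case True
      then obtain n' where n': "ndep n' h" by blast
      define M where "M = max n n'"
      have fM: "ndep M f" "ndep M g" "ndep M h"
        using ndep_mono[OF a(1), of M] ndep_mono[OF a(2), of M] ndep_mono[OF n', of M] M_def by auto
      have fg: "Q M (\<lambda>j xs. f j xs = g j xs)" using Q_eq_level[OF a(1,2), of M] a(3) M_def by simp
      have e1: "ueqv J G I F f h \<longleftrightarrow> Q M (\<lambda>j xs. f j xs = h j xs)" by (rule ueqv_iff[OF fM(1,3)])
      have e2: "ueqv J G I F g h \<longleftrightarrow> Q M (\<lambda>j xs. g j xs = h j xs)" by (rule ueqv_iff[OF fM(2,3)])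
      have "Q M (\<lambda>j xs. f j xs = h j xs) \<longleftrightarrow> Q M (\<lambda>j xs. g j xs = h j xs)"
      proof
        assume "Q M (\<lambda>j xs. f j xs = h j xs)"
        from Q_conj[OF fg this] show "Q M (\<lambda>j xs. g j xs = h j xs)" by (rule Q_mono) metis
      next
        assume "Q M (\<lambda>j xs. g j xs = h j xs)"
        from Q_conj[OF fg this] show "Q M (\<lambda>j xs. f j xs = h j xs)" by (rule Q_mono) metis
      qed
      then show ?thesis using e1 e2 True unfolding ucls_def by simp
    next
      case False
      then show ?thesis unfolding ucls_def by simp
    qed
  qed
qed

lemma ucls_list_eq: "\<forall>f\<in>set fs. ndep n f \<Longrightarrow> \<forall>g\<in>set gs. ndep n g \<Longrightarrow> map uc fs = map uc gs
  \<Longrightarrow> Q n (\<lambda>j xs. map (\<lambda>f. f j xs) fs = map (\<lambda>g. g j xs) gs)"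
proof (induction fs arbitrary: gs)
  case Nil
  then show ?case by (simp add: Q_all)
next
  case (Cons f fs)
  then obtain g gs' where gs: "gs = g # gs'" by (cases gs) auto
  have 1: "Q n (\<lambda>j xs. f j xs = g j xs)" using ucls_eq[of n f g] Cons.prems gs by simp
  have 2: "Q n (\<lambda>j xs. map (\<lambda>f. f j xs) fs = map (\<lambda>g. g j xs) gs')" using Cons gs by simp
  from Q_conj[OF 1 2] show ?case unfolding gs by (rule Q_mono) simp
qed

lemma Q_transfer:
  assumes "\<forall>f\<in>set fs. ndep N1 f" "\<forall>g\<in>set gs. ndep N2 g" "map uc fs = map uc gs"
    "n \<le> N1" "n \<le> N2" "Q N1 (\<lambda>j xs. \<Phi> j (take n xs) (map (\<lambda>f. f j xs) fs))"
  shows "Q N2 (\<lambda>j xs. \<Phi> j (take n xs) (map (\<lambda>g. g j xs) gs))"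
proof -
  define M where "M = max N1 N2"
  have l1: "N1 \<le> M" "N2 \<le> M" using M_def by auto
  have d1: "\<Phi> j (take n xs) (map (\<lambda>f. f j xs) fs)
       = \<Phi> j (take n (take N1 xs)) (map (\<lambda>f. f j (take N1 xs)) fs)" if "N1 \<le> length xs" for j xs
  proof -
    have "map (\<lambda>f. f j xs) fs = map (\<lambda>f. f j (take N1 xs)) fs" by (rule map_ndep[OF assms(1) that])
    moreover have "take n (take N1 xs) = take n xs" using assms(4) by (simp add: min_absorb1)
    ultimately show ?thesis by (simp only:)
  qed
  have d2: "\<Phi> j (take n xs) (map (\<lambda>g. g j xs) gs)
       = \<Phi> j (take n (take N2 xs)) (map (\<lambda>g. g j (take N2 xs)) gs)" if "N2 \<le> length xs" for j xs
  proof -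
    have "map (\<lambda>g. g j xs) gs = map (\<lambda>g. g j (take N2 xs)) gs" by (rule map_ndep[OF assms(2) that])
    moreover have "take n (take N2 xs) = take n xs" using assms(5) by (simp add: min_absorb1)
    ultimately show ?thesis by (simp only:)
  qed
  have "Q M (\<lambda>j xs. \<Phi> j (take n xs) (map (\<lambda>f. f j xs) fs))"
    using Q_LV[OF l1(1), of "\<lambda>j xs. \<Phi> j (take n xs) (map (\<lambda>f. f j xs) fs)"] d1 assms(6) by simp
  moreover have "Q M (\<lambda>j xs. map (\<lambda>f. f j xs) fs = map (\<lambda>g. g j xs) gs)"
    using ucls_list_eq[of fs M gs] assms(1-3) l1 ndep_mono by blast
  ultimately have "Q M (\<lambda>j xs. \<Phi> j (take n xs) (map (\<lambda>g. g j xs) gs))"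
    by (rule Q_mono[OF Q_conj]) (metis (no_types))
  then show ?thesis
    using Q_LV[OF l1(2), of "\<lambda>j xs. \<Phi> j (take n xs) (map (\<lambda>g. g j xs) gs)"] d2 by simp
qed

end

lemma vf_ndep: "vfun J B I n f \<Longrightarrow> ndep n f"
  by (simp add: vfun_def)

lemma ndep_app:
  fixes gs :: "('j \<Rightarrow> 'i list \<Rightarrow> 'u) list"
  assumes "\<forall>g\<in>set gs. ndep N g"
  shows "ndep N (\<lambda>j xs. \<Phi> j (map (\<lambda>g. g j xs) gs))"
  unfolding ndep_def
proof (intro allI impI)
  fix j and xs :: "'i list" assume l: "N \<le> length xs"
  show "\<Phi> j (map (\<lambda>g. g j xs) gs) = \<Phi> j (map (\<lambda>g. g j (take N xs)) gs)"
    using map_ndep[OF assms l, of j] by (simp only:)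
qed

lemma exists_level: "\<forall>x\<in>set ys. \<exists>m. ndep m (h x) \<Longrightarrow> \<exists>N. n \<le> N \<and> (\<forall>x\<in>set ys. ndep N (h x))"
proof (induction ys)
  case Nil
  then show ?case by auto
next
  case (Cons a ys)
  then obtain N where N: "n \<le> N" "\<forall>x\<in>set ys. ndep N (h x)" by auto
  obtain m where m: "ndep m (h a)" using Cons.prems by auto
  have "\<forall>x\<in>set ys. ndep (max N m) (h x)" using N(2) ndep_mono by (metis max.cobounded1)
  moreover have "ndep (max N m) (h a)" using m ndep_mono by (metis max.cobounded2)
  ultimately show ?case using N(1) by (intro exI[of _ "max N m"]) auto
qed

locale lc = ufs J G I F for J :: "'j set" and G and I :: "nat \<Rightarrow> 'i set" and F +
  fixes B :: "'j \<Rightarrow> ('f, 'r, 'u) struct" and fa :: "'f \<Rightarrow> nat" and ra :: "'r \<Rightarrow> nat"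
  assumes strB: "\<And>j. j \<in> J \<Longrightarrow> is_struct fa ra (B j)"
begin

abbreviation "S \<equiv> limit_struct J B G I F"
abbreviation "U \<equiv> ups_lim J B G I F"
abbreviation "vf \<equiv> vfun J B I"
abbreviation "ur \<equiv> urep J B G I F"

lemma ucls_in_dom: "vf n f \<Longrightarrow> uc f \<in> dom S"
  by (auto simp: limit_struct_def An_def)

lemma dom_S_rep: "c \<in> dom S \<Longrightarrow> \<exists>n f. vf n f \<and> c = uc f"
  by (auto simp: limit_struct_def An_def)

lemma urep: "c \<in> dom S \<Longrightarrow> (\<exists>n. vf n (ur c)) \<and> c = uc (ur c)"
proof -
  assume "c \<in> dom S"
  then have "\<exists>f. (\<exists>n. vf n f) \<and> c = uc f" using dom_S_rep by blast
  then show ?thesis unfolding urep_def by (rule someI_ex)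
qed

lemma dom_B_ne: "j \<in> J \<Longrightarrow> dom (B j) \<noteq> {}"
  using strB by (simp add: is_struct_def)

lemma teval_dom: "j \<in> J \<Longrightarrow> (\<forall>x. v x \<in> dom (B j)) \<Longrightarrow> wf_trm fa t \<Longrightarrow> teval (B j) v t \<in> dom (B j)"
proof (induction t)
  case (Var x)
  then show ?case by simp
next
  case (Fn f ts)
  have "map (teval (B j) v) ts \<in> tuples (fa f) (dom (B j))"
    using Fn by (auto simp: tuples_def)
  then show ?case using strB[OF Fn.prems(1)] by (simp add: is_struct_def)
qed

lemma trep_vf:
  assumes "\<forall>x. vf n (vr x)" "wf_trm fa t"
  shows "vf n (\<lambda>j xs. teval (B j) (\<lambda>x. vr x j xs) t)"
  unfolding vfun_def ndep_def
proof (intro conjI allI impI ballI)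
  fix j and xs :: "'i list" assume l: "n \<le> length xs"
  have "(\<lambda>x. vr x j xs) = (\<lambda>x. vr x j (take n xs))"
    using assms(1) l by (intro ext) (meson ndepD vf_ndep)
  then show "teval (B j) (\<lambda>x. vr x j xs) t = teval (B j) (\<lambda>x. vr x j (take n xs)) t" by (simp only:)
next
  fix j xs assume "j \<in> J" "xs \<in> vlists I n"
  then show "teval (B j) (\<lambda>x. vr x j xs) t \<in> dom (B j)"
    using assms by (intro teval_dom) (auto simp: vfun_def)
qed

lemma teval_S:
  assumes "\<forall>x. vf n (vr x)"
  shows "wf_trm fa t \<Longrightarrow> teval S (\<lambda>x. uc (vr x)) t = uc (\<lambda>j xs. teval (B j) (\<lambda>x. vr x j xs) t)"
proof (induction t)
  case (Var x)
  then show ?case by simp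
next
  case (Fn f ts)
  define tr where "tr t = (\<lambda>j xs. teval (B j) (\<lambda>x. vr x j xs) t)" for t
  have wf: "\<forall>t\<in>set ts. wf_trm fa t" using Fn.prems by simp
  have trvf: "vf n (tr t)" if "t \<in> set ts" for t unfolding tr_def using trep_vf[OF assms] wf that by blast
  have ih: "map (teval S (\<lambda>x. uc (vr x))) ts = map (\<lambda>t. uc (tr t)) ts"
    using Fn.IH wf unfolding tr_def by simp
  define gs where "gs = map (\<lambda>t. ur (uc (tr t))) ts"
  define hs where "hs = map tr ts"
  have ur: "(\<exists>m. vf m (ur (uc (tr t)))) \<and> uc (tr t) = uc (ur (uc (tr t)))" if "t \<in> set ts" for t
    using urep[OF ucls_in_dom[OF trvf[OF that]]] .
  have "\<forall>t\<in>set ts. \<exists>m. ndep m (ur (uc (tr t)))" using ur vf_ndep by blast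
  then obtain N where N: "n \<le> N" "\<forall>t\<in>set ts. ndep N (ur (uc (tr t)))"
    using exists_level[of ts "\<lambda>t. ur (uc (tr t))" n] by blast
  have gsN: "\<forall>g\<in>set gs. ndep N g" using N(2) unfolding gs_def by auto
  have hsN: "\<forall>g\<in>set hs. ndep N g" unfolding hs_def using trvf vf_ndep ndep_mono N(1) by fastforce
  have "map uc gs = map uc hs" unfolding gs_def hs_def using ur by auto
  then have eq: "Q N (\<lambda>j xs. map (\<lambda>f. f j xs) gs = map (\<lambda>g. g j xs) hs)"
    using ucls_list_eq gsN hsN by blast
  have ndg: "ndep N (\<lambda>j xs. fun_int (B j) f (map (\<lambda>g. g j xs) gs))"
    using ndep_app[OF gsN, of "\<lambda>j ys. fun_int (B j) f ys"] by simp
  have ndh: "ndep N (\<lambda>j xs. fun_int (B j) f (map (\<lambda>g. g j xs) hs))"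
    using ndep_app[OF hsN, of "\<lambda>j ys. fun_int (B j) f ys"] by simp
  have "Q N (\<lambda>j xs. fun_int (B j) f (map (\<lambda>g. g j xs) gs) = fun_int (B j) f (map (\<lambda>g. g j xs) hs))"
    by (rule Q_mono[OF eq]) metis
  then have "uc (\<lambda>j xs. fun_int (B j) f (map (\<lambda>g. g j xs) gs)) = uc (\<lambda>j xs. fun_int (B j) f (map (\<lambda>g. g j xs) hs))"
    using ucls_eq[OF ndg ndh] by simp
  moreover have "fun_int S f (map (teval S (\<lambda>x. uc (vr x))) ts)
     = uc (\<lambda>j xs. fun_int (B j) f (map (\<lambda>g. g j xs) gs))"
    unfolding ih gs_def by (simp add: limit_struct_def comp_def)
  moreover have "(\<lambda>j xs. teval (B j) (\<lambda>x. vr x j xs) (Fn f ts)) = (\<lambda>j xs. fun_int (B j) f (map (\<lambda>g. g j xs) hs))"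
    unfolding hs_def tr_def by (simp add: comp_def)
  ultimately show ?case by simp
qed

lemma rel_int_S:
  assumes "\<forall>f\<in>set fs. vf n f"
  shows "map uc fs \<in> rel_int S r \<longleftrightarrow> Q n (\<lambda>j xs. map (\<lambda>f. f j xs) fs \<in> rel_int (B j) r)"
proof
  assume "map uc fs \<in> rel_int S r"
  then obtain fs' n' where h: "map uc fs = map uc fs'" "\<forall>f\<in>set fs'. vf n' f"
     "Q n' (\<lambda>j xs. map (\<lambda>f. f j xs) fs' \<in> rel_int (B j) r)"
    by (auto simp: limit_struct_def)
  have a1: "\<forall>f\<in>set fs'. ndep n' f" using h(2) vf_ndep by blast
  have a2: "\<forall>f\<in>set fs. ndep n f" using assms vf_ndep by blast
  note T = Q_transfer[where \<Phi>="\<lambda>j p ys. ys \<in> rel_int (B j) r", OF a1 a2 h(1)[symmetric] le0 le0]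
  from T[OF h(3)] show "Q n (\<lambda>j xs. map (\<lambda>f. f j xs) fs \<in> rel_int (B j) r)" by simp
next
  assume "Q n (\<lambda>j xs. map (\<lambda>f. f j xs) fs \<in> rel_int (B j) r)"
  then show "map uc fs \<in> rel_int S r" using assms by (auto simp: limit_struct_def)
qed

end

context lc begin

definition Dk :: "nat \<Rightarrow> nat \<Rightarrow> ('j \<Rightarrow> 'i list \<Rightarrow> 'u list set) \<Rightarrow> nat \<Rightarrow> ('j \<Rightarrow> 'i list \<Rightarrow> 'u) set list set" where
  "Dk m n0 Rp k = {cs. \<exists>fs. length fs = m \<and> cs = map uc fs \<and> (\<forall>f\<in>set fs. vf k f)
      \<and> Q k (\<lambda>j xs. map (\<lambda>f. f j xs) fs \<in> Rp j (take n0 xs))}"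

definition tup_ok :: "nat \<Rightarrow> nat \<Rightarrow> ('j \<Rightarrow> 'i list \<Rightarrow> 'u list set) \<Rightarrow> bool" where
  "tup_ok m n0 Rp \<longleftrightarrow> (\<forall>j\<in>J. \<forall>xs\<in>vlists I n0. Rp j xs \<subseteq> tuples m (dom (B j)))"

definition Lim :: "nat \<Rightarrow> nat \<Rightarrow> ('j \<Rightarrow> 'i list \<Rightarrow> 'u list set) \<Rightarrow> ('j \<Rightarrow> 'i list \<Rightarrow> 'u) set list set" where
  "Lim m n0 Rp = (\<Union>d. Dk m n0 Rp (n0 + d))"

lemma D_mem:
  assumes "n0 \<le> N" "n0 \<le> k" "\<forall>f\<in>set fs. vf N f" "map uc fs \<in> Dk m n0 Rp k"
  shows "Q N (\<lambda>j xs. map (\<lambda>f. f j xs) fs \<in> Rp j (take n0 xs))"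
proof -
  obtain gs where g: "map uc fs = map uc gs" "\<forall>f\<in>set gs. vf k f"
      "Q k (\<lambda>j xs. map (\<lambda>f. f j xs) gs \<in> Rp j (take n0 xs))"
    using assms(4) unfolding Dk_def by blast
  have a1: "\<forall>f\<in>set gs. ndep k f" using g(2) vf_ndep by blast
  have a2: "\<forall>f\<in>set fs. ndep N f" using assms(3) vf_ndep by blast
  note T = Q_transfer[where \<Phi>="\<lambda>j p ys. ys \<in> Rp j p", OF a1 a2 g(1)[symmetric] assms(2) assms(1)]
  from T[OF g(3)] show ?thesis .
qed

lemma usec_vf:
  assumes "vf (Suc k) g" "i \<in> I k"
  shows "vf k (usec k i g)"
  unfolding vfun_def
proof (intro conjI ballI)
  show "ndep k (usec k i g)" unfolding ndep_def usec_def by (simp add: min_def)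
next
  fix j xs assume a: "j \<in> J" "xs \<in> vlists I k"
  have "usec k i g j xs = g j (xs @ [i])" using vlists_len[OF a(2)] by (simp add: usec_def)
  moreover have "xs @ [i] \<in> vlists I (Suc k)" by (rule vlists_snoc[OF a(2) assms(2)])
  ultimately show "usec k i g j xs \<in> dom (B j)" using assms(1) a(1) unfolding vfun_def by simp
qed

lemma D_step_set:
  assumes "n0 \<le> k" "length gs = m" "\<forall>g\<in>set gs. vf (Suc k) g"
  shows "{i \<in> I k. map (\<lambda>g. uc (usec k i g)) gs \<in> Dk m n0 Rp k}
       = {i \<in> I k. Q k (\<lambda>j xs. map (\<lambda>g. g j (xs @ [i])) gs \<in> Rp j (take n0 (xs @ [i])))}"
proof (intro Collect_cong conj_cong refl)
  fix i assume i: "i \<in> I k"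
  define fs where "fs = map (usec k i) gs"
  have fvf: "\<forall>f\<in>set fs. vf k f" unfolding fs_def using usec_vf assms(3) i by auto
  have e1: "map (\<lambda>g. uc (usec k i g)) gs = map uc fs" unfolding fs_def by simp
  have e2: "Q k (\<lambda>j xs. map (\<lambda>f. f j xs) fs \<in> Rp j (take n0 xs))
      = Q k (\<lambda>j xs. map (\<lambda>g. g j (xs @ [i])) gs \<in> Rp j (take n0 (xs @ [i])))"
  proof (rule Q_cong)
    fix j xs assume "xs \<in> vlists I k"
    then have l: "length xs = k" by (rule vlists_len)
    then have "map (\<lambda>f. f j xs) fs = map (\<lambda>g. g j (xs @ [i])) gs" unfolding fs_def usec_def by simp
    moreover have "take n0 (xs @ [i]) = take n0 xs" using l assms(1) by simp
    ultimately show "(map (\<lambda>f. f j xs) fs \<in> Rp j (take n0 xs))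
       = (map (\<lambda>g. g j (xs @ [i])) gs \<in> Rp j (take n0 (xs @ [i])))" by simp
  qed
  have "map uc fs \<in> Dk m n0 Rp k \<longleftrightarrow> Q k (\<lambda>j xs. map (\<lambda>f. f j xs) fs \<in> Rp j (take n0 xs))"
  proof
    assume "map uc fs \<in> Dk m n0 Rp k"
    then show "Q k (\<lambda>j xs. map (\<lambda>f. f j xs) fs \<in> Rp j (take n0 xs))"
      using D_mem[OF assms(1) assms(1) fvf] by blast
  next
    assume "Q k (\<lambda>j xs. map (\<lambda>f. f j xs) fs \<in> Rp j (take n0 xs))"
    moreover have "length fs = m" unfolding fs_def using assms(2) by simp
    ultimately show "map uc fs \<in> Dk m n0 Rp k" unfolding Dk_def using fvf by blast
  qed
  then show "(map (\<lambda>g. uc (usec k i g)) gs \<in> Dk m n0 Rp k)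
     = Q k (\<lambda>j xs. map (\<lambda>g. g j (xs @ [i])) gs \<in> Rp j (take n0 (xs @ [i])))"
    using e1 e2 by simp
qed

lemma D_step:
  assumes "n0 \<le> k"
  shows "ext_rel J B G I F k (Dk m n0 Rp k) = Dk m n0 Rp (Suc k)"
proof (intro set_eqI iffI)
  fix cs assume "cs \<in> ext_rel J B G I F k (Dk m n0 Rp k)"
  then obtain gs where g: "cs = map uc gs" "\<forall>g\<in>set gs. vf (Suc k) g"
    "{i \<in> I k. map (\<lambda>g. uc (usec k i g)) gs \<in> Dk m n0 Rp k} \<in> F k"
    unfolding ext_rel_def by blast
  have "{i \<in> I k. map (\<lambda>g. uc (usec k i g)) gs \<in> Dk m n0 Rp k} \<noteq> {}"
    using g(3) uf_empty[OF ufF] by metis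
  then obtain i where "map (\<lambda>g. uc (usec k i g)) gs \<in> Dk m n0 Rp k" by blast
  then have len: "length gs = m" unfolding Dk_def
    by (auto dest: arg_cong[of _ _ length])
  have "Q (Suc k) (\<lambda>j ys. map (\<lambda>g. g j ys) gs \<in> Rp j (take n0 ys))"
    using g(3) D_step_set[OF assms len g(2)] by simp
  then show "cs \<in> Dk m n0 Rp (Suc k)" unfolding Dk_def using g(1,2) len by blast
next
  fix cs assume "cs \<in> Dk m n0 Rp (Suc k)"
  then obtain gs where g: "length gs = m" "cs = map uc gs" "\<forall>g\<in>set gs. vf (Suc k) g"
    "Q (Suc k) (\<lambda>j ys. map (\<lambda>g. g j ys) gs \<in> Rp j (take n0 ys))"
    unfolding Dk_def by blast
  have "{i \<in> I k. map (\<lambda>g. uc (usec k i g)) gs \<in> Dk m n0 Rp k} \<in> F k"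
    using g(4) D_step_set[OF assms g(1) g(3)] by simp
  then show "cs \<in> ext_rel J B G I F k (Dk m n0 Rp k)" unfolding ext_rel_def using g(2,3) by blast
qed

lemma chain: "rel_chain J B G I F n0 (Dk m n0 Rp n0) d = Dk m n0 Rp (n0 + d)"
proof (induction d)
  case 0
  then show ?case by simp
next
  case (Suc d)
  then show ?case using D_step[of n0 "n0 + d" m Rp] by simp
qed

lemma D_base: "{cs. \<exists>fs. length fs = m \<and> cs = map uc fs \<and> (\<forall>f\<in>set fs. vf n0 f)
       \<and> Q n0 (\<lambda>j xs. map (\<lambda>f. f j xs) fs \<in> Rp j xs)} = Dk m n0 Rp n0"
proof -
  have "Q n0 (\<lambda>j xs. map (\<lambda>f. f j xs) fs \<in> Rp j xs) = Q n0 (\<lambda>j xs. map (\<lambda>f. f j xs) fs \<in> Rp j (take n0 xs))" for fs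
    by (rule Q_cong) (simp add: vlists_len)
  then show ?thesis unfolding Dk_def by simp
qed

lemma ups_n_D: "R \<in> ups_n J B G I F n0 m \<longleftrightarrow> (\<exists>Rp. tup_ok m n0 Rp \<and> R = Dk m n0 Rp n0)"
  unfolding ups_n_def tup_ok_def using D_base by auto

lemma U_char: "R \<in> U m \<longleftrightarrow> (\<exists>n0 Rp. tup_ok m n0 Rp \<and> R = Lim m n0 Rp)"
proof
  assume "R \<in> U m"
  then obtain n0 R0 where r: "R = (\<Union>d. rel_chain J B G I F n0 R0 d)" "R0 \<in> ups_n J B G I F n0 m"
    unfolding ups_lim_def by blast
  then obtain Rp where "tup_ok m n0 Rp" "R0 = Dk m n0 Rp n0" using ups_n_D by blast
  then show "\<exists>n0 Rp. tup_ok m n0 Rp \<and> R = Lim m n0 Rp" using r(1) chain unfolding Lim_def by auto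
next
  assume "\<exists>n0 Rp. tup_ok m n0 Rp \<and> R = Lim m n0 Rp"
  then obtain n0 Rp where a: "tup_ok m n0 Rp" "R = Lim m n0 Rp" by blast
  then have "Dk m n0 Rp n0 \<in> ups_n J B G I F n0 m" using ups_n_D by blast
  moreover have "R = (\<Union>d. rel_chain J B G I F n0 (Dk m n0 Rp n0) d)" using a(2) chain unfolding Lim_def by auto
  ultimately show "R \<in> U m" unfolding ups_lim_def by blast
qed

lemma Lim_mem:
  assumes "n0 \<le> N" "length fs = m" "\<forall>f\<in>set fs. vf N f"
  shows "map uc fs \<in> Lim m n0 Rp \<longleftrightarrow> Q N (\<lambda>j xs. map (\<lambda>f. f j xs) fs \<in> Rp j (take n0 xs))"
proof
  assume "map uc fs \<in> Lim m n0 Rp"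
  then obtain d where "map uc fs \<in> Dk m n0 Rp (n0 + d)" unfolding Lim_def by blast
  then show "Q N (\<lambda>j xs. map (\<lambda>f. f j xs) fs \<in> Rp j (take n0 xs))"
    by (rule D_mem[OF assms(1) le_add1 assms(3)])
next
  assume "Q N (\<lambda>j xs. map (\<lambda>f. f j xs) fs \<in> Rp j (take n0 xs))"
  then have "map uc fs \<in> Dk m n0 Rp (n0 + (N - n0))" unfolding Dk_def using assms by auto
  then show "map uc fs \<in> Lim m n0 Rp" unfolding Lim_def by blast
qed

end

lemma some_wit:
  assumes "A \<noteq> {}"
  shows "(SOME a. a \<in> A \<and> (P a \<or> \<not> (\<exists>a\<in>A. P a))) \<in> A
     \<and> ((\<exists>a\<in>A. P a) \<longrightarrow> P (SOME a. a \<in> A \<and> (P a \<or> \<not> (\<exists>a\<in>A. P a))))"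
proof -
  have "\<exists>a. a \<in> A \<and> (P a \<or> \<not> (\<exists>a\<in>A. P a))"
    by (cases "\<exists>a\<in>A. P a") (use assms in auto)
  from someI_ex[OF this] show ?thesis by blast
qed

context ufs begin
lemma Q_conj_iff: "Q n (\<lambda>j xs. P j xs \<and> P' j xs) \<longleftrightarrow> Q n P \<and> Q n P'"
proof
  assume a: "Q n (\<lambda>j xs. P j xs \<and> P' j xs)"
  have "Q n P" using a by (rule Q_mono) simp
  moreover have "Q n P'" using a by (rule Q_mono) simp
  ultimately show "Q n P \<and> Q n P'" ..
next
  assume "Q n P \<and> Q n P'"
  then show "Q n (\<lambda>j xs. P j xs \<and> P' j xs)" using Q_conj by blast
qed
end

context lc begin

definition good :: "nat \<Rightarrow> (nat \<Rightarrow> 'j \<Rightarrow> 'i list \<Rightarrow> 'u) \<Rightarrow> (nat \<times> nat \<Rightarrow> 'j \<Rightarrow> 'i list \<Rightarrow> 'u list set)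
    \<Rightarrow> (nat \<Rightarrow> ('j \<Rightarrow> 'i list \<Rightarrow> 'u) set) \<Rightarrow> (nat \<times> nat \<Rightarrow> ('j \<Rightarrow> 'i list \<Rightarrow> 'u) set list set) \<Rightarrow> bool" where
  "good n vr Vr v V \<longleftrightarrow> (\<forall>x. vf n (vr x) \<and> v x = uc (vr x))
     \<and> (\<forall>Xm j xs. n \<le> length xs \<longrightarrow> Vr Xm j xs = Vr Xm j (take n xs))
     \<and> (\<forall>X m fs N. 1 \<le> m \<longrightarrow> n \<le> N \<longrightarrow> length fs = m \<longrightarrow> (\<forall>f\<in>set fs. vf N f) \<longrightarrow>
          (map uc fs \<in> V (X, m) \<longleftrightarrow> Q N (\<lambda>j xs. map (\<lambda>f. f j xs) fs \<in> Vr (X, m) j xs)))"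

lemma goodD1: "good n vr Vr v V \<Longrightarrow> vf n (vr x)"
  unfolding good_def by blast
lemma goodD2: "good n vr Vr v V \<Longrightarrow> v = (\<lambda>x. uc (vr x))"
  unfolding good_def by (intro ext) blast
lemma goodD3: "good n vr Vr v V \<Longrightarrow> n \<le> length xs \<Longrightarrow> Vr Xm j xs = Vr Xm j (take n xs)"
  unfolding good_def by blast
lemma goodD4: "good n vr Vr v V \<Longrightarrow> 1 \<le> m \<Longrightarrow> n \<le> N \<Longrightarrow> length fs = m \<Longrightarrow> \<forall>f\<in>set fs. vf N f
   \<Longrightarrow> (map uc fs \<in> V (X, m) \<longleftrightarrow> Q N (\<lambda>j xs. map (\<lambda>f. f j xs) fs \<in> Vr (X, m) j xs))"
  unfolding good_def by blast

lemma goodI: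
  assumes "\<And>x. vf n (vr x)" "\<And>x. v x = uc (vr x)"
    "\<And>Xm j xs. n \<le> length xs \<Longrightarrow> Vr Xm j xs = Vr Xm j (take n xs)"
    "\<And>X m fs N. 1 \<le> m \<Longrightarrow> n \<le> N \<Longrightarrow> length fs = m \<Longrightarrow> \<forall>f\<in>set fs. vf N f \<Longrightarrow>
          (map uc fs \<in> V (X, m) \<longleftrightarrow> Q N (\<lambda>j xs. map (\<lambda>f. f j xs) fs \<in> Vr (X, m) j xs))"
  shows "good n vr Vr v V"
  unfolding good_def using assms by blast

lemma good_dep:
  assumes "good n vr Vr v V" "n \<le> length xs"
  shows "(\<lambda>y. vr y j xs) = (\<lambda>y. vr y j (take n xs))" "(\<lambda>Xm. Vr Xm j xs) = (\<lambda>Xm. Vr Xm j (take n xs))"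
proof -
  show "(\<lambda>y. vr y j xs) = (\<lambda>y. vr y j (take n xs))"
  proof (rule ext)
    fix y show "vr y j xs = vr y j (take n xs)"
      using ndepD[OF vf_ndep[OF goodD1[OF assms(1)]] assms(2)] .
  qed
  show "(\<lambda>Xm. Vr Xm j xs) = (\<lambda>Xm. Vr Xm j (take n xs))"
  proof (rule ext)
    fix Xm show "Vr Xm j xs = Vr Xm j (take n xs)" using goodD3[OF assms] .
  qed
qed

lemma Q_good_LV:
  assumes "good n vr Vr v V" "n \<le> N"
  shows "Q N (\<lambda>j xs. \<Psi> j (\<lambda>y. vr y j xs) (\<lambda>Xm. Vr Xm j xs)) = Q n (\<lambda>j xs. \<Psi> j (\<lambda>y. vr y j xs) (\<lambda>Xm. Vr Xm j xs))"
proof (rule Q_LV[OF assms(2)])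
  fix j and xs :: "'i list" assume l: "n \<le> length xs"
  note e = good_dep[OF assms(1) l, of j]
  show "\<Psi> j (\<lambda>y. vr y j xs) (\<lambda>Xm. Vr Xm j xs) = \<Psi> j (\<lambda>y. vr y j (take n xs)) (\<lambda>Xm. Vr Xm j (take n xs))"
    by (subst e(1), subst e(2)) (rule refl)
qed

lemma good_mono:
  assumes g: "good n vr Vr v V" and l: "n \<le> N"
  shows "good N vr Vr v V"
proof (rule goodI)
  fix x show "vf N (vr x)" using vfun_mono[OF goodD1[OF g] l] .
  show "v x = uc (vr x)" using goodD2[OF g] by simp
next
  fix Xm j and xs :: "'i list" assume a: "N \<le> length xs"
  have l1: "n \<le> length xs" using a l by simp
  have l2: "n \<le> length (take N xs)" using a l by simp
  have 1: "Vr Xm j xs = Vr Xm j (take n xs)" by (rule goodD3[OF g l1])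
  have 2: "Vr Xm j (take N xs) = Vr Xm j (take n (take N xs))" by (rule goodD3[OF g l2])
  have 3: "take n (take N xs) = take n xs" using l by (simp add: min_absorb1)
  show "Vr Xm j xs = Vr Xm j (take N xs)" using 1 2 3 by simp
next
  fix X m fs N' assume "1 \<le> m" "N \<le> N'" "length fs = m" "\<forall>f\<in>set fs. vf N' f"
  then show "(map uc fs \<in> V (X, m)) = Q N' (\<lambda>j xs. map (\<lambda>f. f j xs) fs \<in> Vr (X, m) j xs)"
    using goodD4[OF g] l by simp
qed

lemma good_upd:
  assumes g: "good n vr Vr v V" and f: "vf n f"
  shows "good n (vr(x := f)) Vr (v(x := uc f)) V"
proof (rule goodI)
  fix y show "vf n ((vr(x := f)) y)" using goodD1[OF g] f by simp
  show "(v(x := uc f)) y = uc ((vr(x := f)) y)" using goodD2[OF g] by simp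
next
  fix Xm j and xs :: "'i list" assume "n \<le> length xs"
  then show "Vr Xm j xs = Vr Xm j (take n xs)" by (rule goodD3[OF g])
next
  fix X m fs N' assume "1 \<le> m" "n \<le> N'" "length fs = m" "\<forall>f\<in>set fs. vf N' f"
  then show "(map uc fs \<in> V (X, m)) = Q N' (\<lambda>j xs. map (\<lambda>f. f j xs) fs \<in> Vr (X, m) j xs)"
    using goodD4[OF g] by simp
qed

lemma good_updR:
  assumes g: "good n vr Vr v V" and l: "n0 \<le> n"
  shows "good n vr (Vr((X, m) := (\<lambda>j xs. Rp j (take n0 xs)))) v (V((X, m) := Lim m n0 Rp))"
proof (rule goodI)
  fix y show "vf n (vr y)" using goodD1[OF g] .
  show "v y = uc (vr y)" using goodD2[OF g] by simp
next
  fix Xm j and xs :: "'i list" assume a: "n \<le> length xs"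
  show "(Vr((X, m) := (\<lambda>j xs. Rp j (take n0 xs)))) Xm j xs = (Vr((X, m) := (\<lambda>j xs. Rp j (take n0 xs)))) Xm j (take n xs)"
  proof (cases "Xm = (X, m)")
    case True
    have "take n0 (take n xs) = take n0 xs" using l by (simp add: min_absorb1)
    then show ?thesis using True by simp
  next
    case False
    have "Vr Xm j xs = Vr Xm j (take n xs)" by (rule goodD3[OF g a])
    then show ?thesis using False by simp
  qed
next
  fix X' m' fs N' assume a: "1 \<le> m'" "n \<le> N'" "length fs = m'" "\<forall>f\<in>set fs. vf N' f"
  show "(map uc fs \<in> (V((X, m) := Lim m n0 Rp)) (X', m'))
     = Q N' (\<lambda>j xs. map (\<lambda>f. f j xs) fs \<in> (Vr((X, m) := (\<lambda>j xs. Rp j (take n0 xs)))) (X', m') j xs)"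
  proof (cases "(X', m') = (X, m)")
    case True
    then have "m' = m" "X' = X" by auto
    then show ?thesis using Lim_mem[of n0 N' fs m Rp] a l by simp
  next
    case False
    then show ?thesis using goodD4[OF g a] by auto
  qed
qed

end

context lc begin

lemma upd_fun: "(\<lambda>y. (vr(x := f)) y j xs) = (\<lambda>y. vr y j xs)(x := f j xs)"
  by (rule ext) simp

lemma upd_funR: "(\<lambda>Xm. (Vr(Xm0 := R)) Xm j xs) = (\<lambda>Xm. Vr Xm j xs)(Xm0 := R j xs)"
  by (rule ext) simp

lemma full_rels_ne: "full_rels S' m \<noteq> {}"
  by (auto simp: full_rels_def)

lemma los:
  "wf_form fa ra \<phi> \<Longrightarrow> good n vr Vr v V \<Longrightarrow>
   hsat S U v V \<phi> \<longleftrightarrow> Q n (\<lambda>j xs. hsat (B j) (full_rels (B j)) (\<lambda>y. vr y j xs) (\<lambda>Xm. Vr Xm j xs) \<phi>)"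
proof (induction \<phi> arbitrary: n vr Vr v V)
  case (Eq s t)
  have vr: "\<forall>x. vf n (vr x)" using Eq.prems(2) goodD1 by blast
  have v: "v = (\<lambda>x. uc (vr x))" using goodD2[OF Eq.prems(2)] .
  have wf: "wf_trm fa s" "wf_trm fa t" using Eq.prems(1) by simp_all
  have "hsat S U v V (Eq s t) \<longleftrightarrow> uc (\<lambda>j xs. teval (B j) (\<lambda>x. vr x j xs) s) = uc (\<lambda>j xs. teval (B j) (\<lambda>x. vr x j xs) t)"
    using teval_S[OF vr wf(1)] teval_S[OF vr wf(2)] v by simp
  also have "\<dots> \<longleftrightarrow> Q n (\<lambda>j xs. teval (B j) (\<lambda>x. vr x j xs) s = teval (B j) (\<lambda>x. vr x j xs) t)"
    by (rule ucls_eq[OF vf_ndep[OF trep_vf[OF vr wf(1)]] vf_ndep[OF trep_vf[OF vr wf(2)]]])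
  finally show ?case by simp
next
  case (Rel r ts)
  have vr: "\<forall>x. vf n (vr x)" using Rel.prems(2) goodD1 by blast
  have v: "v = (\<lambda>x. uc (vr x))" using goodD2[OF Rel.prems(2)] .
  have wf: "\<forall>t\<in>set ts. wf_trm fa t" using Rel.prems(1) by simp
  define fs where "fs = map (\<lambda>t j xs. teval (B j) (\<lambda>x. vr x j xs) t) ts"
  have fvf: "\<forall>f\<in>set fs. vf n f" unfolding fs_def using trep_vf[OF vr] wf by auto
  have "map (teval S v) ts = map uc fs" unfolding fs_def v using teval_S[OF vr] wf by simp
  then have "hsat S U v V (Rel r ts) \<longleftrightarrow> map uc fs \<in> rel_int S r" by simp
  also have "\<dots> \<longleftrightarrow> Q n (\<lambda>j xs. map (\<lambda>f. f j xs) fs \<in> rel_int (B j) r)" by (rule rel_int_S[OF fvf])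
  finally show ?case unfolding fs_def by (simp add: comp_def)
next
  case (RVar X ts)
  have vr: "\<forall>x. vf n (vr x)" using RVar.prems(2) goodD1 by blast
  have v: "v = (\<lambda>x. uc (vr x))" using goodD2[OF RVar.prems(2)] .
  have wf: "\<forall>t\<in>set ts. wf_trm fa t" "ts \<noteq> []" using RVar.prems(1) by simp_all
  define fs where "fs = map (\<lambda>t j xs. teval (B j) (\<lambda>x. vr x j xs) t) ts"
  have fvf: "\<forall>f\<in>set fs. vf n f" unfolding fs_def using trep_vf[OF vr] wf by auto
  have len: "length fs = length ts" "1 \<le> length ts" unfolding fs_def using wf(2) by (auto simp: Suc_le_eq)
  have "map (teval S v) ts = map uc fs" unfolding fs_def v using teval_S[OF vr] wf by simp
  then have "hsat S U v V (RVar X ts) \<longleftrightarrow> map uc fs \<in> V (X, length ts)" by simp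
  also have "\<dots> \<longleftrightarrow> Q n (\<lambda>j xs. map (\<lambda>f. f j xs) fs \<in> Vr (X, length ts) j xs)"
    by (rule goodD4[OF RVar.prems(2) len(2) le_refl len(1) fvf])
  finally show ?case unfolding fs_def by (simp add: comp_def)
next
  case (Neg p)
  have "hsat S U v V p \<longleftrightarrow> Q n (\<lambda>j xs. hsat (B j) (full_rels (B j)) (\<lambda>y. vr y j xs) (\<lambda>Xm. Vr Xm j xs) p)"
    using Neg.IH[OF _ Neg.prems(2)] Neg.prems(1) by simp
  then show ?case using Q_neg[of n "\<lambda>j xs. hsat (B j) (full_rels (B j)) (\<lambda>y. vr y j xs) (\<lambda>Xm. Vr Xm j xs) p"]
    by simp
next
  case (Conj p q)
  have "hsat S U v V p \<longleftrightarrow> Q n (\<lambda>j xs. hsat (B j) (full_rels (B j)) (\<lambda>y. vr y j xs) (\<lambda>Xm. Vr Xm j xs) p)"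
    using Conj.IH(1)[OF _ Conj.prems(2)] Conj.prems(1) by simp
  moreover have "hsat S U v V q \<longleftrightarrow> Q n (\<lambda>j xs. hsat (B j) (full_rels (B j)) (\<lambda>y. vr y j xs) (\<lambda>Xm. Vr Xm j xs) q)"
    using Conj.IH(2)[OF _ Conj.prems(2)] Conj.prems(1) by simp
  ultimately show ?case using Q_conj_iff by simp
next
  case (Ex x p)
  have wf: "wf_form fa ra p" using Ex.prems(1) by simp
  note IH = Ex.IH[OF wf]
  have g: "good n vr Vr v V" by fact
  show ?case
  proof
    assume "hsat S U v V (Ex x p)"
    then obtain a where a: "a \<in> dom S" "hsat S U (v(x := a)) V p" by auto
    then obtain n' f where f: "vf n' f" "a = uc f" using dom_S_rep by blast
    define M where "M = max n n'"
    have gM: "good M vr Vr v V" using good_mono[OF g] M_def by simp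
    have fM: "vf M f" using vfun_mono[OF f(1)] M_def by simp
    have "Q M (\<lambda>j xs. hsat (B j) (full_rels (B j)) (\<lambda>y. (vr(x := f)) y j xs) (\<lambda>Xm. Vr Xm j xs) p)"
      using IH[OF good_upd[OF gM fM, where x=x], THEN iffD1] a(2) f(2) by blast
    then have "Q M (\<lambda>j xs. hsat (B j) (full_rels (B j)) (\<lambda>y. vr y j xs) (\<lambda>Xm. Vr Xm j xs) (Ex x p))"
    proof (rule Q_mono)
      fix j xs assume jx: "j \<in> J" "xs \<in> vlists I M"
        "hsat (B j) (full_rels (B j)) (\<lambda>y. (vr(x := f)) y j xs) (\<lambda>Xm. Vr Xm j xs) p"
      have "f j xs \<in> dom (B j)" using fM jx(1,2) unfolding vfun_def by blast
      then show "hsat (B j) (full_rels (B j)) (\<lambda>y. vr y j xs) (\<lambda>Xm. Vr Xm j xs) (Ex x p)"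
        using jx(3) unfolding upd_fun by auto
    qed
    then show "Q n (\<lambda>j xs. hsat (B j) (full_rels (B j)) (\<lambda>y. vr y j xs) (\<lambda>Xm. Vr Xm j xs) (Ex x p))"
      using Q_good_LV[OF g, of M "\<lambda>j vv VV. hsat (B j) (full_rels (B j)) vv VV (Ex x p)"] M_def by simp
  next
    assume q: "Q n (\<lambda>j xs. hsat (B j) (full_rels (B j)) (\<lambda>y. vr y j xs) (\<lambda>Xm. Vr Xm j xs) (Ex x p))"
    define P where "P j xs a = hsat (B j) (full_rels (B j)) ((\<lambda>y. vr y j xs)(x := a)) (\<lambda>Xm. Vr Xm j xs) p" for j xs a
    define w0 where "w0 j xs = (SOME a. a \<in> dom (B j) \<and> (P j xs a \<or> \<not> (\<exists>a\<in>dom (B j). P j xs a)))" for j xs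
    define f where "f j xs = w0 j (take n xs)" for j xs
    have w0: "w0 j xs \<in> dom (B j) \<and> ((\<exists>a\<in>dom (B j). P j xs a) \<longrightarrow> P j xs (w0 j xs))" if "j \<in> J" for j xs
      unfolding w0_def using some_wit[OF dom_B_ne[OF that]] .
    have fvf: "vf n f" unfolding vfun_def
    proof (intro conjI ballI)
      show "ndep n f" unfolding ndep_def f_def by (simp add: min_def)
      fix j xs assume "j \<in> J" "xs \<in> vlists I n"
      then show "f j xs \<in> dom (B j)" unfolding f_def using w0 vlists_len by simp
    qed
    have "Q n (\<lambda>j xs. hsat (B j) (full_rels (B j)) (\<lambda>y. (vr(x := f)) y j xs) (\<lambda>Xm. Vr Xm j xs) p)"
      using q
    proof (rule Q_mono)
      fix j xs assume jx: "j \<in> J" "xs \<in> vlists I n"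
        "hsat (B j) (full_rels (B j)) (\<lambda>y. vr y j xs) (\<lambda>Xm. Vr Xm j xs) (Ex x p)"
      have "\<exists>a\<in>dom (B j). P j xs a" using jx(3) unfolding P_def by simp
      then have "P j xs (w0 j xs)" using w0[OF jx(1)] by blast
      moreover have "f j xs = w0 j xs" unfolding f_def using vlists_len[OF jx(2)] by simp
      ultimately show "hsat (B j) (full_rels (B j)) (\<lambda>y. (vr(x := f)) y j xs) (\<lambda>Xm. Vr Xm j xs) p"
        unfolding upd_fun P_def by simp
    qed
    then have "hsat S U (v(x := uc f)) V p" using IH[OF good_upd[OF g fvf, where x=x], THEN iffD2] by blast
    then show "hsat S U v V (Ex x p)" using ucls_in_dom[OF fvf] by auto
  qed
next
  case (ExR X m p)
  have wf: "wf_form fa ra p" "1 \<le> m" using ExR.prems(1) by simp_all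
  note IH = ExR.IH[OF wf(1)]
  have g: "good n vr Vr v V" by fact
  show ?case
  proof
    assume "hsat S U v V (ExR X m p)"
    then obtain R where R: "R \<in> U m" "hsat S U v (V((X, m) := R)) p" by auto
    then obtain n0 Rp where r: "tup_ok m n0 Rp" "R = Lim m n0 Rp" using U_char by blast
    define M where "M = max n n0"
    have gM: "good M vr Vr v V" using good_mono[OF g] M_def by simp
    have gM': "good M vr (Vr((X, m) := (\<lambda>j xs. Rp j (take n0 xs)))) v (V((X, m) := Lim m n0 Rp))"
      using good_updR[OF gM] M_def by simp
    have "Q M (\<lambda>j xs. hsat (B j) (full_rels (B j)) (\<lambda>y. vr y j xs)
         (\<lambda>Xm. (Vr((X, m) := (\<lambda>j xs. Rp j (take n0 xs)))) Xm j xs) p)"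
      using IH[OF gM', THEN iffD1] R(2) r(2) by blast
    then have "Q M (\<lambda>j xs. hsat (B j) (full_rels (B j)) (\<lambda>y. vr y j xs) (\<lambda>Xm. Vr Xm j xs) (ExR X m p))"
    proof (rule Q_mono)
      fix j xs assume jx: "j \<in> J" "xs \<in> vlists I M"
        "hsat (B j) (full_rels (B j)) (\<lambda>y. vr y j xs) (\<lambda>Xm. (Vr((X, m) := (\<lambda>j xs. Rp j (take n0 xs)))) Xm j xs) p"
      have "take n0 xs \<in> vlists I n0" using vlists_take[OF jx(2)] M_def by simp
      then have "Rp j (take n0 xs) \<in> full_rels (B j) m"
        using r(1) jx(1) unfolding tup_ok_def full_rels_def by blast
      then show "hsat (B j) (full_rels (B j)) (\<lambda>y. vr y j xs) (\<lambda>Xm. Vr Xm j xs) (ExR X m p)"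
        using jx(3) unfolding upd_funR by auto
    qed
    then show "Q n (\<lambda>j xs. hsat (B j) (full_rels (B j)) (\<lambda>y. vr y j xs) (\<lambda>Xm. Vr Xm j xs) (ExR X m p))"
      using Q_good_LV[OF g, of M "\<lambda>j vv VV. hsat (B j) (full_rels (B j)) vv VV (ExR X m p)"] M_def by simp
  next
    assume q: "Q n (\<lambda>j xs. hsat (B j) (full_rels (B j)) (\<lambda>y. vr y j xs) (\<lambda>Xm. Vr Xm j xs) (ExR X m p))"
    define P where "P j xs R = hsat (B j) (full_rels (B j)) (\<lambda>y. vr y j xs) ((\<lambda>Xm. Vr Xm j xs)((X, m) := R)) p" for j xs R
    define Rp where "Rp j xs = (SOME R. R \<in> full_rels (B j) m \<and> (P j xs R \<or> \<not> (\<exists>R\<in>full_rels (B j) m. P j xs R)))" for j xs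
    have rp: "Rp j xs \<in> full_rels (B j) m \<and> ((\<exists>R\<in>full_rels (B j) m. P j xs R) \<longrightarrow> P j xs (Rp j xs))" for j xs
      unfolding Rp_def using some_wit[OF full_rels_ne] .
    have tok: "tup_ok m n Rp" unfolding tup_ok_def using rp unfolding full_rels_def by blast
    have LU: "Lim m n Rp \<in> U m" using U_char tok by blast
    have g': "good n vr (Vr((X, m) := (\<lambda>j xs. Rp j (take n xs)))) v (V((X, m) := Lim m n Rp))"
      using good_updR[OF g le_refl] .
    have "Q n (\<lambda>j xs. hsat (B j) (full_rels (B j)) (\<lambda>y. vr y j xs)
         (\<lambda>Xm. (Vr((X, m) := (\<lambda>j xs. Rp j (take n xs)))) Xm j xs) p)"
      using q
    proof (rule Q_mono)
      fix j xs assume jx: "j \<in> J" "xs \<in> vlists I n"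
        "hsat (B j) (full_rels (B j)) (\<lambda>y. vr y j xs) (\<lambda>Xm. Vr Xm j xs) (ExR X m p)"
      have "\<exists>R\<in>full_rels (B j) m. P j xs R" using jx(3) unfolding P_def by simp
      then have "P j xs (Rp j xs)" using rp by blast
      moreover have "take n xs = xs" using vlists_len[OF jx(2)] by simp
      ultimately show "hsat (B j) (full_rels (B j)) (\<lambda>y. vr y j xs)
         (\<lambda>Xm. (Vr((X, m) := (\<lambda>j xs. Rp j (take n xs)))) Xm j xs) p"
        unfolding upd_funR P_def by simp
    qed
    then have "hsat S U v (V((X, m) := Lim m n Rp)) p" using IH[OF g', THEN iffD2] by blast
    then show "hsat S U v V (ExR X m p)" using LU by auto
  qed
qed

end

fun tvars :: "'f trm \<Rightarrow> nat set" where
  "tvars (Var x) = {x}"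
| "tvars (Fn f ts) = \<Union>(set (map tvars ts))"

fun fvs :: "('f, 'r) form \<Rightarrow> nat set" where
  "fvs (Eq s t) = tvars s \<union> tvars t"
| "fvs (Rel r ts) = \<Union>(set (map tvars ts))"
| "fvs (RVar X ts) = \<Union>(set (map tvars ts))"
| "fvs (Neg p) = fvs p"
| "fvs (Conj p q) = fvs p \<union> fvs q"
| "fvs (Ex x p) = fvs p - {x}"
| "fvs (ExR X m p) = fvs p"

fun frvs :: "('f, 'r) form \<Rightarrow> (nat \<times> nat) set" where
  "frvs (Eq s t) = {}"
| "frvs (Rel r ts) = {}"
| "frvs (RVar X ts) = {(X, length ts)}"
| "frvs (Neg p) = frvs p"
| "frvs (Conj p q) = frvs p \<union> frvs q"
| "frvs (Ex x p) = frvs p"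
| "frvs (ExR X m p) = frvs p - {(X, m)}"

lemma finite_tvars: "finite (tvars t)"
  by (induction t) auto

lemma finite_fvs: "finite (fvs p)"
  by (induction p) (auto simp: finite_tvars)

lemma finite_frvs: "finite (frvs p)"
  by (induction p) auto

lemma teval_agree: "(\<forall>x\<in>tvars t. v x = v' x) \<Longrightarrow> teval S' v t = teval S' v' t"
proof (induction t)
  case (Var x)
  then show ?case by simp
next
  case (Fn f ts)
  have "map (teval S' v) ts = map (teval S' v') ts"
    using Fn by (intro map_cong refl) auto
  then show ?case by (simp only: teval.simps)
qed

lemma hsat_agree:
  "(\<forall>x\<in>fvs p. v x = v' x) \<Longrightarrow> (\<forall>Xm\<in>frvs p. V Xm = V' Xm) \<Longrightarrow> hsat S' Ups v V p = hsat S' Ups v' V' p"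
proof (induction p arbitrary: v v' V V')
  case (Eq s t)
  then show ?case using teval_agree[of s v v' S'] teval_agree[of t v v' S'] by simp
next
  case (Rel r ts)
  have "map (teval S' v) ts = map (teval S' v') ts"
    using Rel by (intro map_cong refl teval_agree) auto
  then show ?case by (simp only: hsat.simps)
next
  case (RVar X ts)
  have "map (teval S' v) ts = map (teval S' v') ts"
    using RVar by (intro map_cong refl teval_agree) auto
  moreover have "V (X, length ts) = V' (X, length ts)" using RVar.prems(2) by simp
  ultimately show ?case by (simp only: hsat.simps)
next
  case (Neg p)
  then show ?case by simp
next
  case (Conj p q)
  have "hsat S' Ups v V p = hsat S' Ups v' V' p" by (rule Conj.IH(1)) (use Conj.prems in auto)
  moreover have "hsat S' Ups v V q = hsat S' Ups v' V' q" by (rule Conj.IH(2)) (use Conj.prems in auto)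
  ultimately show ?case by simp
next
  case (Ex x p)
  have "hsat S' Ups (v(x := a)) V p = hsat S' Ups (v'(x := a)) V' p" for a
    by (rule Ex.IH) (use Ex.prems in auto)
  then show ?case by simp
next
  case (ExR X m p)
  have "hsat S' Ups v (V((X, m) := R)) p = hsat S' Ups v' (V'((X, m) := R)) p" for R
    by (rule ExR.IH) (use ExR.prems in auto)
  then show ?case by simp
qed

context lc begin

definition c0 :: "'j \<Rightarrow> 'i list \<Rightarrow> 'u" where "c0 j xs = (SOME a. a \<in> dom (B j))"

lemma c0_vf: "vf n c0"
  unfolding vfun_def
proof (intro conjI ballI)
  show "ndep n c0" unfolding ndep_def c0_def by simp
  fix j xs assume "j \<in> J" "xs \<in> vlists I n"
  then show "c0 j xs \<in> dom (B j)" unfolding c0_def using dom_B_ne some_in_eq by blast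
qed

lemma tup_ok_empty: "tup_ok m n0 (\<lambda>j xs. {})"
  unfolding tup_ok_def by simp

lemma main_fwd:
  assumes wf: "wf_form fa ra \<phi>" and A: "{j \<in> J. full_models (B j) \<phi>} \<in> G"
  shows "henkin_models S U \<phi>"
  unfolding henkin_models_def
proof (intro allI impI)
  fix v :: "nat \<Rightarrow> ('j \<Rightarrow> 'i list \<Rightarrow> 'u) set" and V :: "nat \<times> nat \<Rightarrow> ('j \<Rightarrow> 'i list \<Rightarrow> 'u) set list set"
  assume hv: "\<forall>x. v x \<in> dom S" and hV: "\<forall>X m. 1 \<le> m \<longrightarrow> V (X, m) \<in> U m"
  have "\<forall>x. \<exists>k. vf k (ur (v x))" using urep hv by blast
  then obtain lv where lv: "\<And>x. vf (lv x) (ur (v x))" by metis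
  have "\<forall>Xm. \<exists>pr. 1 \<le> snd Xm \<longrightarrow> tup_ok (snd Xm) (fst pr) (snd pr) \<and> V Xm = Lim (snd Xm) (fst pr) (snd pr)"
  proof
    fix Xm :: "nat \<times> nat"
    obtain X m where Xm: "Xm = (X, m)" by fastforce
    show "\<exists>pr. 1 \<le> snd Xm \<longrightarrow> tup_ok (snd Xm) (fst pr) (snd pr) \<and> V Xm = Lim (snd Xm) (fst pr) (snd pr)"
    proof (cases "1 \<le> m")
      case True
      then obtain n0 Rp where "tup_ok m n0 Rp" "V (X, m) = Lim m n0 Rp" using hV U_char by blast
      then show ?thesis using Xm by (intro exI[of _ "(n0, Rp)"]) simp
    next
      case False
      then show ?thesis using Xm by simp
    qed
  qed
  from choice[OF this] obtain P where P: "\<And>Xm. 1 \<le> snd Xm \<Longrightarrow> tup_ok (snd Xm) (fst (P Xm)) (snd (P Xm))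
      \<and> V Xm = Lim (snd Xm) (fst (P Xm)) (snd (P Xm))" by blast
  define P' where "P' Xm = (if Xm \<in> frvs \<phi> then P Xm else (0, \<lambda>j xs. {}))" for Xm
  have P'ok: "tup_ok (snd Xm) (fst (P' Xm)) (snd (P' Xm))" if "1 \<le> snd Xm" for Xm
    using P[OF that] tup_ok_empty unfolding P'_def by auto
  define N where "N = Max ((lv ` fvs \<phi>) \<union> ((\<lambda>Xm. fst (P' Xm)) ` frvs \<phi>))"
  have finN: "finite ((lv ` fvs \<phi>) \<union> ((\<lambda>Xm. fst (P' Xm)) ` frvs \<phi>))"
    using finite_fvs finite_frvs by blast
  have lvN: "lv x \<le> N" if "x \<in> fvs \<phi>" for x
    unfolding N_def using finN that by (intro Max_ge) auto
  have PN: "fst (P' Xm) \<le> N" for Xm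
  proof (cases "Xm \<in> frvs \<phi>")
    case True
    then show ?thesis unfolding N_def using finN by (intro Max_ge) auto
  next
    case False
    then show ?thesis unfolding P'_def by simp
  qed
  define vr where "vr x = (if x \<in> fvs \<phi> then ur (v x) else c0)" for x
  define Vr where "Vr Xm = (\<lambda>j xs. snd (P' Xm) j (take (fst (P' Xm)) xs))" for Xm
  define v' where "v' x = uc (vr x)" for x
  define V' where "V' Xm = (if 1 \<le> snd Xm then Lim (snd Xm) (fst (P' Xm)) (snd (P' Xm)) else V Xm)" for Xm
  have g: "good N vr Vr v' V'"
  proof (rule goodI)
    fix x show "vf N (vr x)"
      unfolding vr_def using vfun_mono[OF lv lvN] c0_vf by simp
    show "v' x = uc (vr x)" unfolding v'_def ..
  next
    fix Xm j and xs :: "'i list" assume "N \<le> length xs"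
    have "take (fst (P' Xm)) (take N xs) = take (fst (P' Xm)) xs" using PN[of Xm] by (simp add: min_absorb1)
    then show "Vr Xm j xs = Vr Xm j (take N xs)" unfolding Vr_def by simp
  next
    fix X m fs N' assume a: "1 \<le> m" "N \<le> N'" "length fs = m" "\<forall>f\<in>set fs. vf N' f"
    have "fst (P' (X, m)) \<le> N'" using PN[of "(X, m)"] a(2) by simp
    from Lim_mem[OF this a(3,4)] show "(map uc fs \<in> V' (X, m)) = Q N' (\<lambda>j xs. map (\<lambda>f. f j xs) fs \<in> Vr (X, m) j xs)"
      unfolding V'_def Vr_def using a(1) by simp
  qed
  have "Q N (\<lambda>j xs. full_models (B j) \<phi>)" using A Q_const by simp
  then have "Q N (\<lambda>j xs. hsat (B j) (full_rels (B j)) (\<lambda>y. vr y j xs) (\<lambda>Xm. Vr Xm j xs) \<phi>)"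
  proof (rule Q_mono)
    fix j xs assume jx: "j \<in> J" "xs \<in> vlists I N" "full_models (B j) \<phi>"
    have d: "\<forall>y. vr y j xs \<in> dom (B j)" using goodD1[OF g] jx(1,2) unfolding vfun_def by blast
    have r: "\<forall>X m. 1 \<le> m \<longrightarrow> Vr (X, m) j xs \<in> full_rels (B j) m"
    proof (intro allI impI)
      fix X m assume m: "1 \<le> (m::nat)"
      have "take (fst (P' (X, m))) xs \<in> vlists I (fst (P' (X, m)))" using vlists_take[OF jx(2) PN] .
      then show "Vr (X, m) j xs \<in> full_rels (B j) m"
        using P'ok[of "(X, m)"] m jx(1) unfolding Vr_def tup_ok_def full_rels_def by auto
    qed
    show "hsat (B j) (full_rels (B j)) (\<lambda>y. vr y j xs) (\<lambda>Xm. Vr Xm j xs) \<phi>"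
    proof -
      have hm: "\<forall>v V. (\<forall>x. v x \<in> dom (B j)) \<longrightarrow> (\<forall>X m. 1 \<le> m \<longrightarrow> V (X, m) \<in> full_rels (B j) m)
          \<longrightarrow> hsat (B j) (full_rels (B j)) v V \<phi>"
        using jx(3) unfolding full_models_def henkin_models_def .
      show ?thesis using hm[rule_format, of "\<lambda>y. vr y j xs" "\<lambda>Xm. Vr Xm j xs"] d r by simp
    qed
  qed
  then have h: "hsat S U v' V' \<phi>" using los[OF wf g] by simp
  have e1: "\<forall>x\<in>fvs \<phi>. v' x = v x" unfolding v'_def vr_def using urep hv by auto
  have e2: "\<forall>Xm\<in>frvs \<phi>. V' Xm = V Xm" unfolding V'_def P'_def using P by auto
  show "hsat S U v V \<phi>" using h hsat_agree[OF e1 e2] by simp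
qed

lemma main_bwd:
  assumes wf: "wf_form fa ra \<phi>" and H: "henkin_models S U \<phi>"
  shows "{j \<in> J. full_models (B j) \<phi>} \<in> G"
proof (rule ccontr)
  define A where "A = {j \<in> J. full_models (B j) \<phi>}"
  assume "{j \<in> J. full_models (B j) \<phi>} \<notin> G"
  then have JA: "J - A \<in> G" using uf_compl[OF ufG, of A] unfolding A_def by auto
  have "\<forall>j. \<exists>w. j \<in> J - A \<longrightarrow> (\<forall>x. fst w x \<in> dom (B j)) \<and> (\<forall>X m. 1 \<le> m \<longrightarrow> snd w (X, m) \<in> full_rels (B j) m)
        \<and> \<not> hsat (B j) (full_rels (B j)) (fst w) (snd w) \<phi>"
    unfolding A_def full_models_def henkin_models_def by auto
  from choice[OF this] obtain W where W: "\<And>j. j \<in> J - A \<Longrightarrow> (\<forall>x. fst (W j) x \<in> dom (B j))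
      \<and> (\<forall>X m. 1 \<le> m \<longrightarrow> snd (W j) (X, m) \<in> full_rels (B j) m) \<and> \<not> hsat (B j) (full_rels (B j)) (fst (W j)) (snd (W j)) \<phi>"
    by blast
  define vr where "vr x = (\<lambda>j xs. if j \<in> J - A then fst (W j) x else c0 j xs)" for x
  define Vr where "Vr Xm = (\<lambda>j (xs::'i list). if j \<in> J - A then snd (W j) Xm else {})" for Xm
  define v where "v x = uc (vr x)" for x
  define V where "V Xm = Lim (snd Xm) 0 (Vr Xm)" for Xm
  have vvf: "vf 0 (vr x)" for x
    unfolding vfun_def
  proof (intro conjI ballI)
    show "ndep 0 (vr x)" unfolding ndep_def vr_def c0_def by simp
    fix j xs assume "j \<in> J" "xs \<in> vlists I 0"
    then show "vr x j xs \<in> dom (B j)" unfolding vr_def using W c0_vf[of 0] unfolding vfun_def by auto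
  qed
  have g: "good 0 vr Vr v V"
  proof (rule goodI)
    fix x show "vf 0 (vr x)" by (rule vvf)
    show "v x = uc (vr x)" unfolding v_def ..
  next
    fix Xm j and xs :: "'i list"
    show "Vr Xm j xs = Vr Xm j (take 0 xs)" unfolding Vr_def by simp
  next
    fix X m fs N' assume a: "1 \<le> m" "0 \<le> N'" "length fs = m" "\<forall>f\<in>set fs. vf N' f"
    from Lim_mem[OF a(2) a(3,4), of "Vr (X, m)"]
    show "(map uc fs \<in> V (X, m)) = Q N' (\<lambda>j xs. map (\<lambda>f. f j xs) fs \<in> Vr (X, m) j xs)"
      unfolding V_def Vr_def by simp
  qed
  have hv: "\<forall>x. v x \<in> dom S" unfolding v_def using ucls_in_dom[OF vvf] by blast
  have hV: "\<forall>X m. 1 \<le> m \<longrightarrow> V (X, m) \<in> U m"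
  proof (intro allI impI)
    fix X m assume m: "1 \<le> (m::nat)"
    have "tup_ok m 0 (Vr (X, m))" unfolding tup_ok_def Vr_def using W m unfolding full_rels_def by auto
    then show "V (X, m) \<in> U m" unfolding V_def using U_char by auto
  qed
  have "hsat S U v V \<phi>" using H hv hV unfolding henkin_models_def by blast
  then have "Q 0 (\<lambda>j xs. hsat (B j) (full_rels (B j)) (\<lambda>y. vr y j xs) (\<lambda>Xm. Vr Xm j xs) \<phi>)"
    using los[OF wf g] by simp
  then have "{j \<in> J. hsat (B j) (full_rels (B j)) (\<lambda>y. vr y j []) (\<lambda>Xm. Vr Xm j []) \<phi>} \<in> G" by simp
  from uf_int[OF ufG this JA] have "{j \<in> J. hsat (B j) (full_rels (B j)) (\<lambda>y. vr y j []) (\<lambda>Xm. Vr Xm j []) \<phi>} \<inter> (J - A) \<noteq> {}"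
    using uf_empty[OF ufG] by metis
  then obtain j where j: "j \<in> J - A" "hsat (B j) (full_rels (B j)) (\<lambda>y. vr y j []) (\<lambda>Xm. Vr Xm j []) \<phi>" by blast
  have "(\<lambda>y. vr y j []) = fst (W j)" "(\<lambda>Xm. Vr Xm j []) = snd (W j)"
    using j(1) unfolding vr_def Vr_def by auto
  then show False using j W[OF j(1)] by simp
qed

end

theorem lemma2p17:
  fixes fa :: "'f \<Rightarrow> nat" and ra :: "'r \<Rightarrow> nat"
    and \<phi> :: "('f, 'r) form"
    and J :: "'j set" and B :: "'j \<Rightarrow> ('f, 'r, 'u) struct" and G :: "'j set set"
    and I :: "nat \<Rightarrow> 'i set" and F :: "nat \<Rightarrow> 'i set set"
  assumes "wf_form fa ra \<phi>"
    and "\<forall>j\<in>J. is_struct fa ra (B j)"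
    and "ultrafilter_on J G"
    and "\<forall>n. ultrafilter_on (I n) (F n)"
  shows "{j \<in> J. full_models (B j) \<phi>} \<in> G
     \<longleftrightarrow> henkin_models (limit_struct J B G I F) (ups_lim J B G I F) \<phi>"
proof -
  interpret lc J G I F B fa ra
    by unfold_locales (use assms in auto)
  show ?thesis using main_fwd[OF assms(1)] main_bwd[OF assms(1)] by blast
qed

end
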